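(* Let $A$ be a Banach algebra and $\phi\in\Delta(A)$. If $A$ is $\phi$-biflat, then $A$ is approximately left $\phi$-biprojective.
   Context: $\Delta(A)$ is the set of characters of $A$; $A\otimes_pA$ is the projective tensor product with $a\cdot(b\otimes c)=ab\otimes c$, $(b\otimes c)\cdot a=b\otimes ca$, $\pi_A(a\otimes b)=ab$. For $F\in A^{**}$ put $\tilde\phi(F)=F(\phi)$. $A$ is $\phi$-biflat if there is a bounded $A$-bimodule morphism $\rho:A\to(A\otimes_pA)^{**}$ with $\tilde\phi(\pi_A^{**}(\rho(a)))=\phi(a)$ for all $a\in A$. $A$ is approximately left $\phi$-biprojective if there is a net $(\rho_\alpha)$ of bounded linear maps $A\to A\otimes_pA$ such that for all $a,x\in A$: $\|a\cdot\rho_\alpha(x)-\rho_\alpha(ax)\|\to0$, $\|\rho_\alpha(xa)-\phi(a)\rho_\alpha(x)\|\to0$, and $\phi(\pi_A(\rho_\alpha(x)))-\phi(x)\to0$. *)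

theory Defs
  imports "HOL-Analysis.Analysis"
begin

text \<open>A complex Banach algebra: a (possibly non-unital) real Banach algebra type 'a
  together with a complex scalar multiplication cs extending the real one, compatible
  with the norm and the multiplication.\<close>
definition cplx_banach_alg :: "(complex \<Rightarrow> 'a::{real_normed_algebra,banach} \<Rightarrow> 'a) \<Rightarrow> bool" where
  "cplx_banach_alg cs \<longleftrightarrow>
     (\<forall>r x. cs (complex_of_real r) x = r *\<^sub>R x) \<and>
     (\<forall>c d x. cs c (cs d x) = cs (c * d) x) \<and>
     (\<forall>c x y. cs c (x + y) = cs c x + cs c y) \<and>
     (\<forall>c d x. cs (c + d) x = cs c x + cs d x) \<and>
     (\<forall>c x. norm (cs c x) = cmod c * norm x) \<and>
     (\<forall>c x y. cs c (x * y) = cs c x * y) \<and>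
     (\<forall>c x y. cs c (x * y) = x * cs c y)"

definition clinear_fun :: "(complex \<Rightarrow> 'a::real_normed_algebra \<Rightarrow> 'a) \<Rightarrow> ('a \<Rightarrow> complex) \<Rightarrow> bool" where
  "clinear_fun cs f \<longleftrightarrow> (\<forall>x y. f (x + y) = f x + f y) \<and> (\<forall>c x. f (cs c x) = c * f x)"

definition character :: "(complex \<Rightarrow> 'a::real_normed_algebra \<Rightarrow> 'a) \<Rightarrow> ('a \<Rightarrow> complex) \<Rightarrow> bool" where
  "character cs \<phi> \<longleftrightarrow> clinear_fun cs \<phi> \<and> (\<forall>x y. \<phi> (x * y) = \<phi> x * \<phi> y) \<and> (\<exists>x. \<phi> x \<noteq> 0)"

definition bbil_bound :: "('a::real_normed_algebra \<Rightarrow> 'a \<Rightarrow> complex) \<Rightarrow> real \<Rightarrow> bool" where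
  "bbil_bound T M \<longleftrightarrow> (\<forall>x y. cmod (T x y) \<le> M * norm x * norm y)"

text \<open>Bounded complex-bilinear forms on A x A; this is the dual (A \<otimes>_p A)* .\<close>
definition bbil :: "(complex \<Rightarrow> 'a::real_normed_algebra \<Rightarrow> 'a) \<Rightarrow> ('a \<Rightarrow> 'a \<Rightarrow> complex) set" where
  "bbil cs = {T. (\<forall>x. clinear_fun cs (\<lambda>y. T x y)) \<and> (\<forall>y. clinear_fun cs (\<lambda>x. T x y))
                 \<and> (\<exists>M. bbil_bound T M)}"

text \<open>Elements of the bidual (A \<otimes>_p A)** : bounded linear functionals on bbil cs
  (only their values on bbil cs are relevant).\<close>
definition bidual_elem :: "(complex \<Rightarrow> 'a::real_normed_algebra \<Rightarrow> 'a) \<Rightarrow> (('a \<Rightarrow> 'a \<Rightarrow> complex) \<Rightarrow> complex) \<Rightarrow> bool" where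
  "bidual_elem cs F \<longleftrightarrow>
     (\<forall>S\<in>bbil cs. \<forall>T\<in>bbil cs. F (\<lambda>x y. S x y + T x y) = F S + F T) \<and>
     (\<forall>c. \<forall>T\<in>bbil cs. F (\<lambda>x y. c * T x y) = c * F T) \<and>
     (\<exists>C. \<forall>T\<in>bbil cs. \<forall>M\<ge>0. bbil_bound T M \<longrightarrow> cmod (F T) \<le> C * M)"

text \<open>Module actions on (A \<otimes>_p A) and its bidual, written via the pairing with
  bilinear forms: a\<cdot>(b\<otimes>c) = ab\<otimes>c and (b\<otimes>c)\<cdot>a = b\<otimes>ca, dualised twice.\<close>
definition lact :: "'a::real_normed_algebra \<Rightarrow> (('a \<Rightarrow> 'a \<Rightarrow> complex) \<Rightarrow> complex) \<Rightarrow> (('a \<Rightarrow> 'a \<Rightarrow> complex) \<Rightarrow> complex)" where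
  "lact a F = (\<lambda>T. F (\<lambda>x y. T (a * x) y))"

definition ract :: "(('a::real_normed_algebra \<Rightarrow> 'a \<Rightarrow> complex) \<Rightarrow> complex) \<Rightarrow> 'a \<Rightarrow> (('a \<Rightarrow> 'a \<Rightarrow> complex) \<Rightarrow> complex)" where
  "ract F a = (\<lambda>T. F (\<lambda>x y. T x (y * a)))"

text \<open>phi-biflatness. Note tilde-phi(pi_A**(rho a)) = (rho a)(pi_A* phi) and
  pi_A* phi is the bilinear form (x,y) \<mapsto> phi(xy).\<close>
definition phi_biflat :: "(complex \<Rightarrow> 'a::{real_normed_algebra,banach} \<Rightarrow> 'a) \<Rightarrow> ('a \<Rightarrow> complex) \<Rightarrow> bool" where
  "phi_biflat cs \<phi> \<longleftrightarrow> (\<exists>\<rho> :: 'a \<Rightarrow> (('a \<Rightarrow> 'a \<Rightarrow> complex) \<Rightarrow> complex).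
     (\<forall>a. bidual_elem cs (\<rho> a)) \<and>
     (\<forall>a b. \<forall>T\<in>bbil cs. \<rho> (a + b) T = \<rho> a T + \<rho> b T) \<and>
     (\<forall>c a. \<forall>T\<in>bbil cs. \<rho> (cs c a) T = c * \<rho> a T) \<and>
     (\<exists>C. \<forall>a. \<forall>T\<in>bbil cs. \<forall>M\<ge>0. bbil_bound T M \<longrightarrow> cmod (\<rho> a T) \<le> C * norm a * M) \<and>
     (\<forall>a b. \<forall>T\<in>bbil cs. \<rho> (a * b) T = lact a (\<rho> b) T) \<and>
     (\<forall>a b. \<forall>T\<in>bbil cs. \<rho> (a * b) T = ract (\<rho> a) b T) \<and>
     (\<forall>a. \<rho> a (\<lambda>x y. \<phi> (x * y)) = \<phi> a))"

text \<open>The projective tensor product A \<otimes>_p A: elements are sums \<Sum> a_n \<otimes> b_n with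
  \<Sum> \<parallel>a_n\<parallel>\<parallel>b_n\<parallel> < \<infinity>, identified by their action on bounded bilinear forms.\<close>
definition ptensor :: "(complex \<Rightarrow> 'a::real_normed_algebra \<Rightarrow> 'a) \<Rightarrow> (('a \<Rightarrow> 'a \<Rightarrow> complex) \<Rightarrow> complex) set" where
  "ptensor cs = {F. \<exists>a b :: nat \<Rightarrow> 'a. summable (\<lambda>n. norm (a n) * norm (b n)) \<and>
                    (\<forall>T\<in>bbil cs. F T = (\<Sum>n. T (a n) (b n)))}"

definition ptnorm :: "(complex \<Rightarrow> 'a::real_normed_algebra \<Rightarrow> 'a) \<Rightarrow> (('a \<Rightarrow> 'a \<Rightarrow> complex) \<Rightarrow> complex) \<Rightarrow> real" where
  "ptnorm cs F = Inf {(\<Sum>n. norm (a n) * norm (b n)) | a b :: nat \<Rightarrow> 'a.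
                      summable (\<lambda>n. norm (a n) * norm (b n)) \<and>
                      (\<forall>T\<in>bbil cs. F T = (\<Sum>n. T (a n) (b n)))}"

definition approx_left_phi_biproj_net ::
  "(complex \<Rightarrow> 'a::{real_normed_algebra,banach} \<Rightarrow> 'a) \<Rightarrow> ('a \<Rightarrow> complex) \<Rightarrow> 'i filter
   \<Rightarrow> ('i \<Rightarrow> 'a \<Rightarrow> (('a \<Rightarrow> 'a \<Rightarrow> complex) \<Rightarrow> complex)) \<Rightarrow> bool" where
  "approx_left_phi_biproj_net cs \<phi> F \<rho> \<longleftrightarrow> F \<noteq> bot \<and>
     (\<forall>i. (\<forall>x. \<rho> i x \<in> ptensor cs) \<and>
          (\<forall>x y. \<forall>T\<in>bbil cs. \<rho> i (x + y) T = \<rho> i x T + \<rho> i y T) \<and>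
          (\<forall>c x. \<forall>T\<in>bbil cs. \<rho> i (cs c x) T = c * \<rho> i x T) \<and>
          (\<exists>C. \<forall>x. ptnorm cs (\<rho> i x) \<le> C * norm x)) \<and>
     (\<forall>a x. ((\<lambda>i. ptnorm cs (\<lambda>T. lact a (\<rho> i x) T - \<rho> i (a * x) T)) \<longlongrightarrow> 0) F) \<and>
     (\<forall>a x. ((\<lambda>i. ptnorm cs (\<lambda>T. \<rho> i (x * a) T - \<phi> a * \<rho> i x T)) \<longlongrightarrow> 0) F) \<and>
     (\<forall>x. ((\<lambda>i. \<rho> i x (\<lambda>u v. \<phi> (u * v)) - \<phi> x) \<longlongrightarrow> 0) F)"

definition approx_left_phi_biprojective ::
  "(complex \<Rightarrow> 'a::{real_normed_algebra,banach} \<Rightarrow> 'a) \<Rightarrow> ('a \<Rightarrow> complex) \<Rightarrow> bool" where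
  "approx_left_phi_biprojective cs \<phi> \<longleftrightarrow>
     (\<exists>(F :: ('a set \<times> real) filter) \<rho>. approx_left_phi_biproj_net cs \<phi> F \<rho>)"

end

theory Submission
  imports Defs "HOL-Library.Function_Algebras"
begin



definition vgraph :: "('v::real_vector \<Rightarrow> real) \<Rightarrow> ('v \<times> real) set \<Rightarrow> bool" where
  "vgraph p G \<longleftrightarrow> (\<forall>x a b. (x,a)\<in>G \<longrightarrow> (x,b)\<in>G \<longrightarrow> a = b) \<and> (0,0) \<in> G \<and>
     (\<forall>x a y b. (x,a)\<in>G \<longrightarrow> (y,b)\<in>G \<longrightarrow> (x+y,a+b)\<in>G) \<and>
     (\<forall>x a c. (x,a)\<in>G \<longrightarrow> (c *\<^sub>R x, c*a)\<in>G) \<and> (\<forall>x a. (x,a)\<in>G \<longrightarrow> a \<le> p x)"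

lemma vg_fun: "vgraph p G \<Longrightarrow> (x,a)\<in>G \<Longrightarrow> (x,b)\<in>G \<Longrightarrow> a = b"
  unfolding vgraph_def by blast
lemma vg_0: "vgraph p G \<Longrightarrow> (0,0)\<in>G"
  unfolding vgraph_def by blast
lemma vg_add: "vgraph p G \<Longrightarrow> (x,a)\<in>G \<Longrightarrow> (y,b)\<in>G \<Longrightarrow> (x+y,a+b)\<in>G"
  unfolding vgraph_def by blast
lemma vg_scale: "vgraph p G \<Longrightarrow> (x,a)\<in>G \<Longrightarrow> (c *\<^sub>R x, c*a)\<in>G"
  unfolding vgraph_def by blast
lemma vg_dom: "vgraph p G \<Longrightarrow> (x,a)\<in>G \<Longrightarrow> a \<le> p x"
  unfolding vgraph_def by blast
lemma vgraphI:
  assumes "\<And>x a b. (x,a)\<in>G \<Longrightarrow> (x,b)\<in>G \<Longrightarrow> a = b" "(0,0)\<in>G"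
    "\<And>x a y b. (x,a)\<in>G \<Longrightarrow> (y,b)\<in>G \<Longrightarrow> (x+y,a+b)\<in>G"
    "\<And>x a c. (x,a)\<in>G \<Longrightarrow> (c *\<^sub>R x, c*a)\<in>G" "\<And>x a. (x,a)\<in>G \<Longrightarrow> a \<le> p x"
  shows "vgraph p G"
  unfolding vgraph_def using assms by blast

lemma vgraph_chain:
  assumes C: "C \<in> chains {G. vgraph p G \<and> G0 \<subseteq> G}" and ne: "C \<noteq> {}"
  shows "vgraph p (\<Union>C)"
proof -
  have ch: "\<And>X Y. X\<in>C \<Longrightarrow> Y\<in>C \<Longrightarrow> X \<subseteq> Y \<or> Y \<subseteq> X" using C unfolding chains_def chain_subset_def by blast
  have vg: "\<And>X. X\<in>C \<Longrightarrow> vgraph p X" using C unfolding chains_def by blast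
  have two: "\<exists>Z\<in>C. X \<subseteq> Z \<and> Y \<subseteq> Z" if "X\<in>C" "Y\<in>C" for X Y
    using ch[OF that] that by blast
  show ?thesis
  proof (rule vgraphI)
    fix x a b assume "(x,a)\<in>\<Union>C" "(x,b)\<in>\<Union>C"
    then obtain X Y where "X\<in>C" "Y\<in>C" "(x,a)\<in>X" "(x,b)\<in>Y" by blast
    with two obtain Z where "Z\<in>C" "(x,a)\<in>Z" "(x,b)\<in>Z" by blast
    then show "a = b" using vg_fun[OF vg] by blast
  next
    from ne obtain X where "X\<in>C" by blast
    then show "(0,0)\<in>\<Union>C" using vg_0[OF vg] by blast
  next
    fix x a y b assume "(x,a)\<in>\<Union>C" "(y,b)\<in>\<Union>C"
    then obtain X Y where "X\<in>C" "Y\<in>C" "(x,a)\<in>X" "(y,b)\<in>Y" by blast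
    with two obtain Z where Z: "Z\<in>C" "(x,a)\<in>Z" "(y,b)\<in>Z" by blast
    have "(x+y,a+b)\<in>Z" by (rule vg_add[OF vg[OF Z(1)] Z(2,3)])
    then show "(x+y,a+b)\<in>\<Union>C" using Z(1) by blast
  next
    fix x a c assume "(x,a)\<in>\<Union>C"
    then obtain X where X: "X\<in>C" "(x,a)\<in>X" by blast
    have "(c *\<^sub>R x, c*a)\<in>X" by (rule vg_scale[OF vg[OF X(1)] X(2)])
    then show "(c *\<^sub>R x, c*a)\<in>\<Union>C" using X(1) by blast
  next
    fix x a assume "(x,a)\<in>\<Union>C"
    then obtain X where X: "X\<in>C" "(x,a)\<in>X" by blast
    show "a \<le> p x" by (rule vg_dom[OF vg[OF X(1)] X(2)])
  qed
qed

lemma vgraph_extend: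
  fixes p :: "'v::real_vector \<Rightarrow> real"
  assumes sub: "\<And>x y. p (x + y) \<le> p x + p y"
    and hom: "\<And>c x. c \<ge> 0 \<Longrightarrow> p (c *\<^sub>R x) = c * p x"
    and M: "vgraph p M" and x0: "\<forall>a. (x0,a) \<notin> M"
  shows "\<exists>M'. vgraph p M' \<and> M \<subseteq> M' \<and> M' \<noteq> M"
proof -
  note fnc = vg_fun[OF M] and z = vg_0[OF M] and ad = vg_add[OF M] and sc = vg_scale[OF M] and dom = vg_dom[OF M]
  define S where "S = {a - p (y - x0) | y a. (y,a)\<in>M}"
  define c where "c = Sup S"
  have key: "a - p (y - x0) \<le> p (y' + x0) - a'" if "(y,a)\<in>M" "(y',a')\<in>M" for y a y' a'
  proof -
    have "a + a' \<le> p (y + y')" using dom[OF ad[OF that]] .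
    also have "y + y' = (y - x0) + (y' + x0)" by simp
    finally show ?thesis using sub[of "y - x0" "y' + x0"] by linarith
  qed
  have Sne: "S \<noteq> {}" using z unfolding S_def by blast
  have c1: "a - p (y - x0) \<le> c" if "(y,a)\<in>M" for y a
    unfolding c_def
  proof (rule cSup_upper)
    show "a - p (y - x0) \<in> S" using that unfolding S_def by blast
    show "bdd_above S"
    proof (rule bdd_aboveI)
      fix s assume "s \<in> S"
      then obtain y a where "s = a - p (y - x0)" "(y,a)\<in>M" unfolding S_def by blast
      then show "s \<le> p (0 + x0) - 0" using key[OF _ z] by simp
    qed
  qed
  have c2: "c \<le> p (y + x0) - a" if "(y,a)\<in>M" for y a
    unfolding c_def
  proof (rule cSup_least[OF Sne])
    fix s assume "s \<in> S"
    then obtain y' a' where "s = a' - p (y' - x0)" "(y',a')\<in>M" unfolding S_def by blast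
    then show "s \<le> p (y + x0) - a" using key[OF _ that] by simp
  qed
  define M' where "M' = {(y + t *\<^sub>R x0, a + t * c) | y a t. (y,a)\<in>M}"
  have M'I: "(y + t *\<^sub>R x0, a + t * c) \<in> M'" if "(y,a)\<in>M" for y a t
    unfolding M'_def using that by blast
  have inj: "t = t' \<and> y = y' \<and> a = a'" if "(y,a)\<in>M" "(y',a')\<in>M" "y + t *\<^sub>R x0 = y' + t' *\<^sub>R x0" for y a y' a' t t'
  proof (cases "t = t'")
    case True
    then have "y = y'" using that(3) by simp
    then show ?thesis using True fnc[OF that(1)] that(2) by blast
  next
    case False
    have "(y' + (-1) *\<^sub>R y, a' + (-1) * a) \<in> M" using ad[OF that(2) sc[OF that(1)]] .
    then have "((1/(t - t')) *\<^sub>R (y' + (-1) *\<^sub>R y), (1/(t-t')) * (a' + (-1) * a)) \<in> M" by (rule sc)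
    moreover have "(1/(t - t')) *\<^sub>R (y' + (-1) *\<^sub>R y) = x0"
    proof -
      have "y' + (-1) *\<^sub>R y = (y' + t' *\<^sub>R x0) - y - t' *\<^sub>R x0" by simp
      also have "\<dots> = (y + t *\<^sub>R x0) - y - t' *\<^sub>R x0" using that(3) by simp
      also have "\<dots> = (t - t') *\<^sub>R x0" by (simp add: scaleR_diff_left)
      finally show ?thesis using False by simp
    qed
    ultimately have "(x0, (1/(t-t')) * (a' + (-1) * a)) \<in> M" by simp
    with x0 show ?thesis by blast
  qed
  have vM': "vgraph p M'"
  proof (rule vgraphI)
    fix x a b assume "(x,a)\<in>M'" "(x,b)\<in>M'"
    then obtain y1 a1 t1 y2 a2 t2 where h: "(y1,a1)\<in>M" "(y2,a2)\<in>M" "x = y1 + t1 *\<^sub>R x0" "a = a1 + t1 * c"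
      "x = y2 + t2 *\<^sub>R x0" "b = a2 + t2 * c" unfolding M'_def by blast
    have "t1 = t2 \<and> y1 = y2 \<and> a1 = a2" using h(3,5) by (intro inj[OF h(1,2)]) simp
    then show "a = b" using h(4,6) by simp
  next
    show "(0,0)\<in>M'" using M'I[OF z, of 0] by simp
  next
    fix x a y b assume "(x,a)\<in>M'" "(y,b)\<in>M'"
    then obtain y1 a1 t1 y2 a2 t2 where h: "(y1,a1)\<in>M" "(y2,a2)\<in>M" "x = y1 + t1 *\<^sub>R x0" "a = a1 + t1 * c"
      "y = y2 + t2 *\<^sub>R x0" "b = a2 + t2 * c" unfolding M'_def by blast
    have "x + y = (y1 + y2) + (t1 + t2) *\<^sub>R x0" "a + b = (a1 + a2) + (t1 + t2) * c"
      using h by (simp_all add: algebra_simps)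
    then show "(x+y,a+b)\<in>M'" using M'I[OF ad[OF h(1,2)], of "t1 + t2"] by simp
  next
    fix x a d assume "(x,a)\<in>M'"
    then obtain y1 a1 t1 where h: "(y1,a1)\<in>M" "x = y1 + t1 *\<^sub>R x0" "a = a1 + t1 * c" unfolding M'_def by blast
    have "d *\<^sub>R x = d *\<^sub>R y1 + (d*t1) *\<^sub>R x0" "d * a = d * a1 + (d * t1) * c"
      using h by (simp_all add: algebra_simps)
    then show "(d *\<^sub>R x, d*a)\<in>M'" using M'I[OF sc[OF h(1), of d], of "d*t1"] by simp
  next
    fix x a assume "(x,a)\<in>M'"
    then obtain y a1 t where h: "(y,a1)\<in>M" "x = y + t *\<^sub>R x0" "a = a1 + t * c" unfolding M'_def by blast
    show "a \<le> p x"
    proof (cases "t = 0")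
      case True then show ?thesis using h dom[OF h(1)] by simp
    next
      case False
      show ?thesis
      proof (cases "t > 0")
        case True
        have m: "((1/t) *\<^sub>R y, (1/t) * a1) \<in> M" using sc[OF h(1)] .
        have "c \<le> p ((1/t) *\<^sub>R y + x0) - (1/t) * a1" using c2[OF m] .
        then have "t * c \<le> t * (p ((1/t) *\<^sub>R y + x0) - (1/t) * a1)" using True
          by (intro mult_left_mono) auto
        then have "t * c \<le> t * p ((1/t) *\<^sub>R y + x0) - a1" using True
          by (simp add: right_diff_distrib)
        also have "t * p ((1/t) *\<^sub>R y + x0) = p (t *\<^sub>R ((1/t) *\<^sub>R y + x0))" using hom[of t] True by simp
        also have "t *\<^sub>R ((1/t) *\<^sub>R y + x0) = x" using h True by (simp add: scaleR_add_right)
        finally show ?thesis using h by linarith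
      next
        case False
        with \<open>t \<noteq> 0\<close> have s: "-t > 0" by simp
        have m: "((1/(-t)) *\<^sub>R y, (1/(-t)) * a1) \<in> M" using sc[OF h(1)] .
        have "(1/(-t)) * a1 - p ((1/(-t)) *\<^sub>R y - x0) \<le> c" using c1[OF m] .
        then have "(-t) * ((1/(-t)) * a1 - p ((1/(-t)) *\<^sub>R y - x0)) \<le> (-t) * c" using s
          by (intro mult_left_mono) auto
        then have "a1 - (-t) * p ((1/(-t)) *\<^sub>R y - x0) \<le> - t * c" using s by (simp add: right_diff_distrib)
        also have "(-t) * p ((1/(-t)) *\<^sub>R y - x0) = p ((-t) *\<^sub>R ((1/(-t)) *\<^sub>R y - x0))" using hom[of "-t"] s by simp
        also have "(-t) *\<^sub>R ((1/(-t)) *\<^sub>R y - x0) = x" using h s by (simp add: scaleR_diff_right)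
        finally show ?thesis using h by linarith
      qed
    qed
  qed
  have sub': "M \<subseteq> M'"
  proof
    fix q assume "q \<in> M"
    moreover obtain y a where "q = (y,a)" by (cases q)
    ultimately have "(y + 0 *\<^sub>R x0, a + 0 * c) \<in> M'" using M'I by blast
    then show "q \<in> M'" using \<open>q = (y,a)\<close> by simp
  qed
  have "(0 + 1 *\<^sub>R x0, 0 + 1 * c) \<in> M'" using M'I[OF z] by blast
  then have "(x0, c) \<in> M'" by simp
  then have "M' \<noteq> M" using x0 by blast
  then show ?thesis using vM' sub' by blast
qed

theorem HB_graph:
  fixes p :: "'v::real_vector \<Rightarrow> real"
  assumes sub: "\<And>x y. p (x + y) \<le> p x + p y"
    and hom: "\<And>c x. c \<ge> 0 \<Longrightarrow> p (c *\<^sub>R x) = c * p x"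
    and G0: "vgraph p G0"
  shows "\<exists>g. (\<forall>x y. g (x + y) = g x + g y) \<and> (\<forall>c x. g (c *\<^sub>R x) = c * g x) \<and> (\<forall>x. g x \<le> p x)
     \<and> (\<forall>x a. (x,a) \<in> G0 \<longrightarrow> g x = a)"
proof -
  define A where "A = {G. vgraph p G \<and> G0 \<subseteq> G}"
  have G0A: "G0 \<in> A" unfolding A_def using G0 by simp
  have "\<forall>C\<in>chains A. \<exists>U\<in>A. \<forall>X\<in>C. X \<subseteq> U"
  proof
    fix C assume C: "C \<in> chains A"
    have CA: "C \<subseteq> A" using C unfolding chains_def by simp
    show "\<exists>U\<in>A. \<forall>X\<in>C. X \<subseteq> U"
    proof (cases "C = {}")
      case True
      show ?thesis using G0A True by (intro bexI[of _ G0]) simp_all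
    next
      case False
      from False obtain X where X: "X \<in> C" by blast
      have "G0 \<subseteq> X" using CA X unfolding A_def by auto
      then have "G0 \<subseteq> \<Union>C" using X by blast
      moreover have "vgraph p (\<Union>C)" using vgraph_chain[OF C[unfolded A_def] False] .
      ultimately have "\<Union>C \<in> A" unfolding A_def by simp
      then show ?thesis by (intro bexI[of _ "\<Union>C"]) auto
    qed
  qed
  from Zorn_Lemma2[OF this] obtain M where M: "M \<in> A" and max: "\<And>X. X\<in>A \<Longrightarrow> M \<subseteq> X \<Longrightarrow> X = M"
    by auto
  have vM: "vgraph p M" and G0M: "G0 \<subseteq> M" using M unfolding A_def by auto
  have tot: "\<exists>a. (x,a)\<in>M" for x
  proof (rule ccontr)
    assume "\<not> ?thesis"
    then have "\<forall>a. (x,a) \<notin> M" by simp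
    then obtain M' where M': "vgraph p M'" "M \<subseteq> M'" "M' \<noteq> M" using vgraph_extend[OF sub hom vM \<open>\<forall>a. (x,a) \<notin> M\<close>] by auto
    have "M' \<in> A" unfolding A_def using M'(1,2) G0M by auto
    then show False using max M'(2,3) by auto
  qed
  define g where "g x = (THE a. (x,a)\<in>M)" for x
  have gM: "(x, g x) \<in> M" for x
  proof -
    obtain a where a: "(x,a)\<in>M" using tot by auto
    have "\<exists>!a. (x,a)\<in>M" using a vg_fun[OF vM, of x] by auto
    then show ?thesis unfolding g_def by (rule theI')
  qed
  have gu: "g x = a" if "(x,a)\<in>M" for x a using vg_fun[OF vM gM that] .
  show ?thesis
  proof (intro exI conjI allI impI)
    fix x y show "g (x+y) = g x + g y" using gu[OF vg_add[OF vM gM gM]] .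
  next
    fix c x show "g (c *\<^sub>R x) = c * g x" using gu[OF vg_scale[OF vM gM]] .
  next
    fix x show "g x \<le> p x" using vg_dom[OF vM gM] .
  next
    fix x a assume "(x,a)\<in>G0" then show "g x = a" using gu G0M by auto
  qed
qed




locale cba =
  fixes cs :: "complex \<Rightarrow> 'a::{real_normed_algebra,banach} \<Rightarrow> 'a"
  assumes cba: "cplx_banach_alg cs"
begin

lemma cs_real: "cs (complex_of_real r) x = r *\<^sub>R x" using cba unfolding cplx_banach_alg_def by blast
lemma cs_cs: "cs c (cs d x) = cs (c * d) x" using cba unfolding cplx_banach_alg_def by blast
lemma cs_addR: "cs c (x + y) = cs c x + cs c y" using cba unfolding cplx_banach_alg_def by blast
lemma cs_addL: "cs (c + d) x = cs c x + cs d x" using cba unfolding cplx_banach_alg_def by blast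
lemma cs_norm: "norm (cs c x) = cmod c * norm x" using cba unfolding cplx_banach_alg_def by blast
lemma cs_multL: "cs c (x * y) = cs c x * y" using cba unfolding cplx_banach_alg_def by blast
lemma cs_multR: "cs c (x * y) = x * cs c y" using cba unfolding cplx_banach_alg_def by blast

lemma cs_1[simp]: "cs 1 x = x" using cs_real[of 1 x] by simp
lemma cs_0[simp]: "cs 0 x = 0" using cs_real[of 0 x] by simp
lemma cs_zero[simp]: "cs c 0 = 0" using cs_addR[of c 0 0] by simp
lemma cs_minusR: "cs c (- x) = - cs c x" using cs_addR[of c x "-x"] by (simp add: eq_neg_iff_add_eq_0 add.commute)
lemma cs_diffR: "cs c (x - y) = cs c x - cs c y" using cs_addR[of c x "-y"] cs_minusR by simp
lemma cs_minusL: "cs (- c) x = - cs c x" using cs_addL[of c "-c" x] by (simp add: eq_neg_iff_add_eq_0 add.commute)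
lemma cs_diffL: "cs (c - d) x = cs c x - cs d x" using cs_addL[of c "-d" x] cs_minusL by simp
lemma cs_scaleR: "cs c (r *\<^sub>R x) = r *\<^sub>R cs c x"
proof -
  have "cs c (r *\<^sub>R x) = cs c (cs (complex_of_real r) x)" by (simp add: cs_real)
  also have "\<dots> = cs (c * complex_of_real r) x" by (rule cs_cs)
  also have "\<dots> = cs (complex_of_real r * c) x" by (simp add: mult.commute)
  also have "\<dots> = cs (complex_of_real r) (cs c x)" by (rule cs_cs[symmetric])
  finally show ?thesis by (simp add: cs_real)
qed
lemma cs_decomp: "cs z x = Re z *\<^sub>R x + Im z *\<^sub>R cs \<i> x"
proof -
  have ze: "z = complex_of_real (Re z) + complex_of_real (Im z) * \<i>" by (simp add: complex_eq_iff)
  have "cs z x = cs (complex_of_real (Re z) + complex_of_real (Im z) * \<i>) x"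
    using ze by (rule arg_cong[where f="\<lambda>c. cs c x"])
  also have "\<dots> = cs (complex_of_real (Re z)) x + cs (complex_of_real (Im z) * \<i>) x" by (rule cs_addL)
  also have "cs (complex_of_real (Im z) * \<i>) x = cs (complex_of_real (Im z)) (cs \<i> x)" by (rule cs_cs[symmetric])
  finally show ?thesis by (simp add: cs_real)
qed
lemma cs_sumR: "cs c (sum f A) = (\<Sum>i\<in>A. cs c (f i))"
  by (induction A rule: infinite_finite_induct) (auto simp: cs_addR)

definition bclin :: "('a \<Rightarrow> complex) \<Rightarrow> bool" where
  "bclin F \<longleftrightarrow> clinear_fun cs F \<and> (\<exists>K. \<forall>x. cmod (F x) \<le> K * norm x)"

lemma cl_add: "clinear_fun cs F \<Longrightarrow> F (x + y) = F x + F y" unfolding clinear_fun_def by blast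
lemma cl_cs: "clinear_fun cs F \<Longrightarrow> F (cs c x) = c * F x" unfolding clinear_fun_def by blast
lemma cl_0: "clinear_fun cs F \<Longrightarrow> F 0 = 0" using cl_add[of F 0 0] by simp
lemma cl_minus: "clinear_fun cs F \<Longrightarrow> F (- x) = - F x"
  using cl_add[of F x "-x"] cl_0[of F] by (simp add: eq_neg_iff_add_eq_0 add.commute)
lemma cl_diff: "clinear_fun cs F \<Longrightarrow> F (x - y) = F x - F y"
  using cl_add[of F x "-y"] cl_minus[of F y] by simp
lemma cl_scaleR: "clinear_fun cs F \<Longrightarrow> F (r *\<^sub>R x) = complex_of_real r * F x"
  using cl_cs[of F "complex_of_real r" x] by (simp add: cs_real)

lemma bclinD: "bclin F \<Longrightarrow> clinear_fun cs F" unfolding bclin_def by blast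

lemma bclin_add: "bclin F \<Longrightarrow> bclin G \<Longrightarrow> bclin (\<lambda>u. F u + G u)"
proof -
  assume F: "bclin F" and G: "bclin G"
  then obtain K L where K: "\<And>x. cmod (F x) \<le> K * norm x" and L: "\<And>x. cmod (G x) \<le> L * norm x"
    unfolding bclin_def by blast
  have "cmod (F x + G x) \<le> (K + L) * norm x" for x
    using norm_triangle_ineq[of "F x" "G x"] K[of x] L[of x] by (simp add: distrib_right)
  moreover have "clinear_fun cs (\<lambda>u. F u + G u)" using F G unfolding bclin_def clinear_fun_def
    by (simp add: algebra_simps)
  ultimately show ?thesis unfolding bclin_def by blast
qed

lemma bclin_cmult: "bclin F \<Longrightarrow> bclin (\<lambda>u. c * F u)"
proof -
  assume F: "bclin F"
  then obtain K where K: "\<And>x. cmod (F x) \<le> K * norm x" unfolding bclin_def by blast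
  have "cmod (c * F x) \<le> (cmod c * K) * norm x" for x
    using K[of x] by (simp add: norm_mult mult.assoc mult_left_mono)
  moreover have "clinear_fun cs (\<lambda>u. c * F u)" using F unfolding bclin_def clinear_fun_def
    by (simp add: algebra_simps)
  ultimately show ?thesis unfolding bclin_def by blast
qed

lemma bclin_lmult: "bclin F \<Longrightarrow> bclin (\<lambda>u. F (a * u))"
proof -
  assume F: "bclin F"
  then obtain K where K: "\<And>x. cmod (F x) \<le> K * norm x" unfolding bclin_def by blast
  have "cmod (F (a * x)) \<le> (max K 0 * norm a) * norm x" for x
  proof -
    have "cmod (F (a * x)) \<le> K * norm (a * x)" by (rule K)
    also have "\<dots> \<le> max K 0 * norm (a * x)" by (intro mult_right_mono) auto
    also have "\<dots> \<le> max K 0 * (norm a * norm x)" using norm_mult_ineq by (rule mult_left_mono) auto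
    finally show ?thesis by (simp add: mult.assoc)
  qed
  moreover have "clinear_fun cs (\<lambda>u. F (a * u))" using F unfolding bclin_def clinear_fun_def
    by (simp add: algebra_simps cs_multR[symmetric])
  ultimately show ?thesis unfolding bclin_def by blast
qed

definition cplx :: "('a \<Rightarrow> real) \<Rightarrow> 'a \<Rightarrow> complex" where
  "cplx g y = complex_of_real (g y) - \<i> * complex_of_real (g (cs \<i> y))"

lemma cplx_props:
  assumes add: "\<And>x y. g (x + y) = g x + g y" and sc: "\<And>r x. g (r *\<^sub>R x) = r * g x"
    and bd: "\<And>x. g x \<le> K * norm x"
  shows "bclin (cplx g)" and "\<And>y. Re (cplx g y) = g y" and "\<And>c y. g (cs c y) = Re (c * cplx g y)"
proof -
  have gcs: "g (cs c y) = Re c * g y + Im c * g (cs \<i> y)" for c y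
    unfolding cs_decomp[of c y] by (simp add: add sc)
  have ii: "cs \<i> (cs \<i> y) = - y" for y using cs_cs[of \<i> \<i> y] cs_minusL[of 1 y] by simp
  show "\<And>c y. g (cs c y) = Re (c * cplx g y)"
  proof -
    fix c y show "g (cs c y) = Re (c * cplx g y)" unfolding cplx_def gcs[of c y] by simp
  qed
  show "\<And>y. Re (cplx g y) = g y" unfolding cplx_def by simp
  have abs_g: "\<bar>g x\<bar> \<le> K * norm x" for x
  proof -
    have "g (-x) = - g x" using sc[of "-1" x] by simp
    then show ?thesis using bd[of x] bd[of "-x"] by simp
  qed
  have "cmod (cplx g y) \<le> (2 * K) * norm y" for y
  proof -
    have "cmod (cplx g y) \<le> cmod (complex_of_real (g y)) + cmod (\<i> * complex_of_real (g (cs \<i> y)))"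
      unfolding cplx_def by (rule norm_triangle_ineq4)
    also have "\<dots> = \<bar>g y\<bar> + \<bar>g (cs \<i> y)\<bar>" by (simp add: norm_mult)
    also have "\<dots> \<le> K * norm y + K * norm (cs \<i> y)" using abs_g by (intro add_mono) auto
    also have "\<dots> = (2 * K) * norm y" by (simp add: cs_norm)
    finally show ?thesis .
  qed
  moreover have "clinear_fun cs (cplx g)" unfolding clinear_fun_def
  proof (intro conjI allI)
    fix x y show "cplx g (x + y) = cplx g x + cplx g y" unfolding cplx_def by (simp add: cs_addR add algebra_simps)
  next
    fix c x
    have e1: "g (cs \<i> (cs c x)) = - Im c * g x + Re c * g (cs \<i> x)"
      using gcs[of "\<i> * c" x] by (simp add: cs_cs)
    show "cplx g (cs c x) = c * cplx g x"
      unfolding cplx_def e1 gcs[of c x] by (simp add: complex_eq_iff algebra_simps)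
  qed
  ultimately show "bclin (cplx g)" unfolding bclin_def by blast
qed

end



context cba begin

lemma char_clin: "character cs \<phi> \<Longrightarrow> clinear_fun cs \<phi>" unfolding character_def by blast
lemma char_mult: "character cs \<phi> \<Longrightarrow> \<phi> (x * y) = \<phi> x * \<phi> y" unfolding character_def by blast

fun qp :: "'a \<Rightarrow> nat \<Rightarrow> 'a" where
  "qp y 0 = y" | "qp y (Suc n) = y * qp y n"

lemma qp_norm: "norm (qp y n) \<le> norm y ^ Suc n"
proof (induction n)
  case 0 then show ?case by simp
next
  case (Suc n)
  have "norm (qp y (Suc n)) \<le> norm y * norm (qp y n)" by (simp add: norm_mult_ineq)
  also have "\<dots> \<le> norm y * norm y ^ Suc n" using Suc by (intro mult_left_mono) auto
  finally show ?case by simp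
qed

lemma char_bound:
  assumes ch: "character cs \<phi>"
  shows "cmod (\<phi> x) \<le> norm x"
proof (rule ccontr)
  assume "\<not> ?thesis"
  then have lt: "norm x < cmod (\<phi> x)" by simp
  define l where "l = \<phi> x"
  have l0: "l \<noteq> 0" using lt l_def by auto
  define y where "y = cs (1 / l) x"
  have cl: "clinear_fun cs \<phi>" using char_clin[OF ch] .
  have py: "\<phi> y = 1" unfolding y_def using cl_cs[OF cl] l0 l_def by simp
  have ny: "norm y < 1" unfolding y_def cs_norm using lt l0 l_def
    by (simp add: norm_divide divide_less_eq)
  have sg: "summable (\<lambda>n. norm y ^ Suc n)" using ny by (simp add: summable_geometric)
  have sn: "summable (\<lambda>n. norm (qp y n))"
    by (rule summable_comparison_test[OF _ sg]) (use qp_norm in simp)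
  have sq: "summable (qp y)" using sn by (rule summable_norm_cancel)
  define s where "s = suminf (qp y)"
  have "y * s = (\<Sum>n. y * qp y n)"
    unfolding s_def by (rule bounded_linear.suminf[OF bounded_linear_mult_right sq])
  also have "\<dots> = (\<Sum>n. qp y (Suc n))" by simp
  also have "\<dots> = s - y" unfolding s_def using suminf_split_head[OF sq] by simp
  finally have e: "s = y + y * s" by (simp add: algebra_simps)
  have "\<phi> s = \<phi> y + \<phi> y * \<phi> s" using e cl_add[OF cl] char_mult[OF ch] by metis
  then show False using py by simp
qed

lemma char_bclin: "character cs \<phi> \<Longrightarrow> bclin \<phi>"
  unfolding bclin_def using char_clin char_bound by (metis mult_1)

lemma bbil_clinL: "T \<in> bbil cs \<Longrightarrow> clinear_fun cs (\<lambda>x. T x y)" unfolding bbil_def by blast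
lemma bbil_clinR: "T \<in> bbil cs \<Longrightarrow> clinear_fun cs (\<lambda>y. T x y)" unfolding bbil_def by blast
lemma bbil_addL: "T \<in> bbil cs \<Longrightarrow> T (x + x') y = T x y + T x' y"
  using cl_add[OF bbil_clinL] by blast
lemma bbil_diffL: "T \<in> bbil cs \<Longrightarrow> T (x - x') y = T x y - T x' y"
  using cl_diff[OF bbil_clinL] by blast
lemma bbil_csL: "T \<in> bbil cs \<Longrightarrow> T (cs c x) y = c * T x y"
  using cl_cs[OF bbil_clinL] by blast
lemma bbil_0L: "T \<in> bbil cs \<Longrightarrow> T 0 y = 0"
  using cl_0[OF bbil_clinL] by blast

lemma tensor_bbil:
  assumes F: "bclin F" and G: "bclin G"
  shows "(\<lambda>u v. F u * G v) \<in> bbil cs"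
proof -
  obtain K L where K: "\<And>x. cmod (F x) \<le> K * norm x" and L: "\<And>x. cmod (G x) \<le> L * norm x"
    using F G unfolding bclin_def by blast
  have "cmod (F u * G v) \<le> (max K 0 * max L 0) * norm u * norm v" for u v
  proof -
    have "cmod (F u) \<le> max K 0 * norm u"
      using K[of u] by (meson max.cobounded1 mult_right_mono norm_ge_zero order_trans)
    moreover have "cmod (G v) \<le> max L 0 * norm v"
      using L[of v] by (meson max.cobounded1 mult_right_mono norm_ge_zero order_trans)
    ultimately have "cmod (F u) * cmod (G v) \<le> (max K 0 * norm u) * (max L 0 * norm v)"
      by (intro mult_mono) auto
    then show ?thesis by (simp add: norm_mult algebra_simps)
  qed
  then have "bbil_bound (\<lambda>u v. F u * G v) (max K 0 * max L 0)" unfolding bbil_bound_def by blast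
  moreover have "clinear_fun cs (\<lambda>v. F u * G v)" for u using bclinD[OF G]
    unfolding clinear_fun_def by (simp add: algebra_simps)
  moreover have "clinear_fun cs (\<lambda>u. F u * G v)" for v using bclinD[OF F]
    unfolding clinear_fun_def by (simp add: algebra_simps)
  ultimately show ?thesis unfolding bbil_def by blast
qed

lemma ptnorm_single:
  assumes "\<forall>T\<in>bbil cs. F T = T u v"
  shows "0 \<le> ptnorm cs F" and "ptnorm cs F \<le> norm u * norm v"
proof -
  define a where "a = (\<lambda>n::nat. if n = 0 then u else 0)"
  define b where "b = (\<lambda>n::nat. if n = 0 then v else 0)"
  let ?S = "{(\<Sum>n. norm (a n) * norm (b n)) | a b :: nat \<Rightarrow> 'a.
                      summable (\<lambda>n. norm (a n) * norm (b n)) \<and>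
                      (\<forall>T\<in>bbil cs. F T = (\<Sum>n. T (a n) (b n)))}"
  have e1: "(\<lambda>n. norm (a n) * norm (b n)) = (\<lambda>n. if n = 0 then norm u * norm v else 0)"
    unfolding a_def b_def by auto
  have s1: "(\<lambda>n. norm (a n) * norm (b n)) sums (norm u * norm v)"
    unfolding e1 using sums_single[of 0 "\<lambda>_. norm u * norm v"] by simp
  have "(\<lambda>n. T (a n) (b n)) sums T u v" if "T \<in> bbil cs" for T
  proof -
    have "(\<lambda>n. T (a n) (b n)) = (\<lambda>n. if n = 0 then T u v else 0)"
      unfolding a_def b_def using bbil_0L[OF that] by auto
    then show ?thesis using sums_single[of 0 "\<lambda>_. T u v"] by simp
  qed
  then have "\<forall>T\<in>bbil cs. F T = (\<Sum>n. T (a n) (b n))" using assms sums_unique by metis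
  then have mem: "norm u * norm v \<in> ?S" using s1 sums_unique[OF s1] sums_summable[OF s1] by blast
  have bdd: "bdd_below ?S"
    by (rule bdd_belowI[of _ 0]) (auto intro!: suminf_nonneg)
  show "ptnorm cs F \<le> norm u * norm v" unfolding ptnorm_def
    by (rule cInf_lower[OF mem bdd])
  show "0 \<le> ptnorm cs F" unfolding ptnorm_def
    by (rule cInf_greatest) (use mem in \<open>auto intro!: suminf_nonneg\<close>)
qed

lemma point_sep:
  assumes z: "z \<noteq> 0"
  shows "\<exists>\<psi>. bclin \<psi> \<and> \<psi> z = 1"
proof -
  define G0 where "G0 = {(t *\<^sub>R z, t * norm z) | t. True}"
  have vg: "vgraph norm G0"
  proof (rule vgraphI)
    fix x a b assume "(x,a)\<in>G0" "(x,b)\<in>G0"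
    then obtain t t' where "x = t *\<^sub>R z" "a = t * norm z" "x = t' *\<^sub>R z" "b = t' * norm z"
      unfolding G0_def by blast
    then show "a = b" using z by (metis scaleR_cancel_right)
  next
    show "(0,0)\<in>G0" unfolding G0_def by (intro CollectI exI[of _ 0]) simp
  next
    fix x a y b assume "(x,a)\<in>G0" "(y,b)\<in>G0"
    then obtain t t' where "x = t *\<^sub>R z" "a = t * norm z" "y = t' *\<^sub>R z" "b = t' * norm z"
      unfolding G0_def by blast
    then show "(x+y,a+b)\<in>G0" unfolding G0_def
      by (intro CollectI exI[of _ "t + t'"]) (simp add: algebra_simps)
  next
    fix x a c assume "(x,a)\<in>G0"
    then obtain t where "x = t *\<^sub>R z" "a = t * norm z" unfolding G0_def by blast
    then show "(c *\<^sub>R x, c*a)\<in>G0" unfolding G0_def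
      by (intro CollectI exI[of _ "c * t"]) (simp add: algebra_simps)
  next
    fix x a assume "(x,a)\<in>G0"
    then obtain t where "x = t *\<^sub>R z" "a = t * norm z" unfolding G0_def by blast
    then show "a \<le> norm x" by (simp add: mult_right_mono)
  qed
  have sub: "\<And>x y. norm (x + y) \<le> norm x + norm (y::'a)" by (rule norm_triangle_ineq)
  have hom: "\<And>c x. c \<ge> 0 \<Longrightarrow> norm (c *\<^sub>R x) = c * norm (x::'a)" by simp
  obtain g where gadd: "\<And>x y. g (x + y) = g x + g y" and gsc: "\<And>c x. g (c *\<^sub>R x) = c * g x"
    and gle: "\<And>x. g x \<le> norm x" and g0: "\<And>x a. (x,a)\<in>G0 \<Longrightarrow> g x = a"
    using HB_graph[OF sub hom vg] by blast
  have gz: "g z = norm z" using g0[of z "norm z"] unfolding G0_def by (metis (mono_tags) CollectI mult_1 scaleR_one)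
  have gb: "g x \<le> 1 * norm x" for x using gle by simp
  note cp = cplx_props[OF gadd gsc gb]
  have "Re (cplx g z) = norm z" using cp(2) gz by simp
  then have nz: "cplx g z \<noteq> 0" using z by auto
  have "bclin (\<lambda>u. (1 / cplx g z) * cplx g u)" by (rule bclin_cmult[OF cp(1)])
  moreover have "(1 / cplx g z) * cplx g z = 1" using nz by simp
  ultimately show ?thesis by blast
qed

end



context cba begin

lemma bclin_zero: "bclin (\<lambda>u. 0)" unfolding bclin_def clinear_fun_def by (auto intro: exI[of _ 0])

lemma bclin_sum: "(\<forall>j\<in>J. bclin (F j)) \<Longrightarrow> bclin (\<lambda>u. \<Sum>j\<in>J. c j * F j u)"
proof (induction J rule: infinite_finite_induct)
  case (infinite A) then show ?case using bclin_zero by simp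
next
  case empty then show ?case using bclin_zero by simp
next
  case (insert x F') then show ?case by (simp add: bclin_add bclin_cmult)
qed

lemma transfer:
  fixes \<beta> :: "'a \<Rightarrow> ('a \<Rightarrow> complex) \<Rightarrow> complex"
  assumes baddz: "\<And>z1 z2 F. bclin F \<Longrightarrow> \<beta> (z1 + z2) F = \<beta> z1 F + \<beta> z2 F"
    and bcs: "\<And>c z F. bclin F \<Longrightarrow> \<beta> (cs c z) F = c * \<beta> z F"
    and baddF: "\<And>z F G. bclin F \<Longrightarrow> bclin G \<Longrightarrow> \<beta> z (\<lambda>u. F u + G u) = \<beta> z F + \<beta> z G"
    and bcF: "\<And>z c F. bclin F \<Longrightarrow> \<beta> z (\<lambda>u. c * F u) = c * \<beta> z F"
  shows "finite J \<Longrightarrow> (\<forall>j\<in>J. bclin (F j)) \<Longrightarrow>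
     (\<forall>\<psi>. bclin \<psi> \<longrightarrow> (\<forall>e. (\<Sum>j\<in>J. \<psi> (z j) * F j e) = 0)) \<Longrightarrow> (\<Sum>j\<in>J. \<beta> (z j) (F j)) = 0"
proof (induction J arbitrary: z rule: finite_induct)
  case empty then show ?case by simp
next
  case (insert j0 J)
  have FJ: "\<forall>j\<in>J. bclin (F j)" and F0: "bclin (F j0)" using insert.prems(1) by auto
  have hyp: "\<psi> (z j0) * F j0 e + (\<Sum>j\<in>J. \<psi> (z j) * F j e) = 0" if "bclin \<psi>" for \<psi> e
    using insert.prems(2) that insert.hyps by simp
  have b0: "\<beta> 0 G = 0" if "bclin G" for G using bcs[OF that, of 0 0] by simp
  have bsum: "\<beta> w (\<lambda>u. \<Sum>j\<in>K. c j * F j u) = (\<Sum>j\<in>K. c j * \<beta> w (F j))" if "finite K" "K \<subseteq> J" for w c K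
    using that
  proof (induction K rule: finite_induct)
    case empty
    have "\<beta> w (\<lambda>u. 0 * 0) = 0 * \<beta> w (\<lambda>u. 0)" by (rule bcF[OF bclin_zero])
    then show ?case by simp
  next
    case (insert k K)
    have bk: "bclin (F k)" using insert FJ by auto
    have bK: "bclin (\<lambda>u. \<Sum>j\<in>K. c j * F j u)" using insert FJ by (intro bclin_sum) auto
    have "\<beta> w (\<lambda>u. \<Sum>j\<in>insert k K. c j * F j u) = \<beta> w (\<lambda>u. c k * F k u + (\<Sum>j\<in>K. c j * F j u))"
      using insert by simp
    also have "\<dots> = \<beta> w (\<lambda>u. c k * F k u) + \<beta> w (\<lambda>u. \<Sum>j\<in>K. c j * F j u)"
      by (rule baddF[OF bclin_cmult[OF bk] bK])
    also have "\<dots> = c k * \<beta> w (F k) + (\<Sum>j\<in>K. c j * \<beta> w (F j))"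
      using bcF[OF bk] insert by simp
    finally show ?case using insert by simp
  qed
  show ?case
  proof (cases "z j0 = 0")
    case True
    have "\<forall>\<psi>. bclin \<psi> \<longrightarrow> (\<forall>e. (\<Sum>j\<in>J. \<psi> (z j) * F j e) = 0)"
      using hyp True cl_0[OF bclinD] by fastforce
    then have "(\<Sum>j\<in>J. \<beta> (z j) (F j)) = 0" using insert.IH FJ by blast
    then show ?thesis using insert.hyps True b0[OF F0] by simp
  next
    case False
    obtain \<psi>0 where p0: "bclin \<psi>0" "\<psi>0 (z j0) = 1" using point_sep[OF False] by blast
    have Fj0: "F j0 = (\<lambda>e. \<Sum>j\<in>J. (- \<psi>0 (z j)) * F j e)"
    proof
      fix e show "F j0 e = (\<Sum>j\<in>J. (- \<psi>0 (z j)) * F j e)"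
        using hyp[OF p0(1), of e] p0(2) by (simp add: sum_negf eq_neg_iff_add_eq_0)
    qed
    define z' where "z' j = z j + cs (- \<psi>0 (z j)) (z j0)" for j
    have "\<forall>\<psi>. bclin \<psi> \<longrightarrow> (\<forall>e. (\<Sum>j\<in>J. \<psi> (z' j) * F j e) = 0)"
    proof (intro allI impI)
      fix \<psi> e assume ps: "bclin \<psi>"
      note cl = bclinD[OF ps]
      have "(\<Sum>j\<in>J. \<psi> (z' j) * F j e) = (\<Sum>j\<in>J. \<psi> (z j) * F j e) + \<psi> (z j0) * (\<Sum>j\<in>J. (- \<psi>0 (z j)) * F j e)"
        unfolding z'_def cl_add[OF cl] cl_cs[OF cl]
        by (simp add: sum.distrib sum_distrib_left algebra_simps sum_subtractf sum_negf)
      also have "(\<Sum>j\<in>J. (- \<psi>0 (z j)) * F j e) = F j0 e" using Fj0 by simp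
      finally show "(\<Sum>j\<in>J. \<psi> (z' j) * F j e) = 0" using hyp[OF ps, of e] by (simp add: add.commute)
    qed
    then have IH: "(\<Sum>j\<in>J. \<beta> (z' j) (F j)) = 0" using insert.IH FJ by blast
    have "\<beta> (z' j) (F j) = \<beta> (z j) (F j) + (- \<psi>0 (z j)) * \<beta> (z j0) (F j)" if "j \<in> J" for j
      unfolding z'_def using baddz bcs FJ that by simp
    then have "(\<Sum>j\<in>J. \<beta> (z' j) (F j)) = (\<Sum>j\<in>J. \<beta> (z j) (F j)) + (\<Sum>j\<in>J. (- \<psi>0 (z j)) * \<beta> (z j0) (F j))"
      by (simp add: sum.distrib sum_subtractf sum_negf)
    also have "(\<Sum>j\<in>J. (- \<psi>0 (z j)) * \<beta> (z j0) (F j)) = \<beta> (z j0) (F j0)"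
      using bsum[OF insert.hyps(1) order_refl, of "z j0" "\<lambda>j. - \<psi>0 (z j)"] Fj0 by simp
    finally show ?thesis using IH insert.hyps by (simp add: add.commute)
  qed
qed

end



instantiation "fun" :: (type, real_vector) real_vector
begin
definition scaleR_fun :: "real \<Rightarrow> ('a \<Rightarrow> 'b) \<Rightarrow> 'a \<Rightarrow> 'b" where
  "scaleR_fun r f = (\<lambda>x. r *\<^sub>R f x)"
instance by standard (auto simp: scaleR_fun_def fun_eq_iff algebra_simps)
end

lemma scaleR_fun_apply[simp]: "(r *\<^sub>R f) x = r *\<^sub>R f x" by (simp add: scaleR_fun_def)
lemma minus_fun_apply'[simp]: "(f - g) x = f x - g x" by simp
lemma uminus_fun_apply'[simp]: "(- f) x = - f x" by simp

context cba begin

inductive_set fr :: "('a \<Rightarrow> 'a) set" where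
  fr0: "(\<lambda>y. 0) \<in> fr"
| frS: "G \<in> fr \<Longrightarrow> bclin \<psi> \<Longrightarrow> (\<lambda>y. G y + cs (\<psi> y) e) \<in> fr"

lemma fr_add: "G' \<in> fr \<Longrightarrow> G \<in> fr \<Longrightarrow> (\<lambda>y. G y + G' y) \<in> fr"
proof (induction G' rule: fr.induct)
  case fr0 then show ?case by simp
next
  case (frS G' \<psi> e)
  have "(\<lambda>y. (G y + G' y) + cs (\<psi> y) e) \<in> fr" using frS by (intro fr.frS) auto
  then show ?case by (simp add: add.assoc)
qed

lemma fr_scale: "G \<in> fr \<Longrightarrow> (\<lambda>y. r *\<^sub>R G y) \<in> fr"
proof (induction G rule: fr.induct)
  case fr0 then show ?case by (simp add: fr.fr0)
next
  case (frS G \<psi> e)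
  have "(\<lambda>y. r *\<^sub>R G y + cs (\<psi> y) (r *\<^sub>R e)) \<in> fr" using frS by (intro fr.frS) auto
  then show ?case by (simp add: cs_scaleR scaleR_add_right)
qed

lemma fr_lin: "G \<in> fr \<Longrightarrow> (\<forall>x y. G (x + y) = G x + G y) \<and> (\<forall>c x. G (cs c x) = cs c (G x))
   \<and> (\<exists>K. \<forall>x. norm (G x) \<le> K * norm x)"
proof (induction G rule: fr.induct)
  case fr0 then show ?case by (auto intro: exI[of _ 0])
next
  case (frS G \<psi> e)
  then obtain K where K: "\<And>x. norm (G x) \<le> K * norm x" by blast
  obtain L where L: "\<And>x. cmod (\<psi> x) \<le> L * norm x" using frS unfolding bclin_def by blast
  note cl = bclinD[OF frS(2)]
  have "norm (G x + cs (\<psi> x) e) \<le> (K + L * norm e) * norm x" for x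
  proof -
    have "norm (G x + cs (\<psi> x) e) \<le> norm (G x) + cmod (\<psi> x) * norm e"
      using norm_triangle_ineq[of "G x" "cs (\<psi> x) e"] by (simp add: cs_norm)
    also have "\<dots> \<le> K * norm x + (L * norm x) * norm e"
      using K[of x] L[of x] by (intro add_mono mult_right_mono) auto
    finally show ?thesis by (simp add: algebra_simps)
  qed
  moreover have "G (x + y) + cs (\<psi> (x + y)) e = (G x + cs (\<psi> x) e) + (G y + cs (\<psi> y) e)" for x y
    using frS cl_add[OF cl] by (simp add: cs_addL algebra_simps)
  moreover have "G (cs c x) + cs (\<psi> (cs c x)) e = cs c (G x + cs (\<psi> x) e)" for c x
    using frS cl_cs[OF cl] by (simp add: cs_addR cs_cs)
  ultimately show ?case by blast
qed

end

locale setting = cba cs for cs :: "complex \<Rightarrow> 'a::{real_normed_algebra,banach} \<Rightarrow> 'a" +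
  fixes \<phi> :: "'a \<Rightarrow> complex" and \<rho> :: "'a \<Rightarrow> (('a \<Rightarrow> 'a \<Rightarrow> complex) \<Rightarrow> complex)" and a0 :: 'a
  assumes ch: "character cs \<phi>"
    and rb: "\<And>a. bidual_elem cs (\<rho> a)"
    and radd: "\<And>a b T. T\<in>bbil cs \<Longrightarrow> \<rho> (a + b) T = \<rho> a T + \<rho> b T"
    and rcs: "\<And>c a T. T\<in>bbil cs \<Longrightarrow> \<rho> (cs c a) T = c * \<rho> a T"
    and rl: "\<And>a b T. T\<in>bbil cs \<Longrightarrow> \<rho> (a * b) T = lact a (\<rho> b) T"
    and rr: "\<And>a b T. T\<in>bbil cs \<Longrightarrow> \<rho> (a * b) T = ract (\<rho> a) b T"
    and rphi: "\<And>a. \<rho> a (\<lambda>x y. \<phi> (x * y)) = \<phi> a"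
    and a0: "\<phi> a0 = 1"
begin

lemma phi_cl: "clinear_fun cs \<phi>" using char_clin[OF ch] .
lemma phi_bc: "bclin \<phi>" using char_bclin[OF ch] .
lemma phi_mult: "\<phi> (x * y) = \<phi> x * \<phi> y" using char_mult[OF ch] .

definition \<beta> :: "'a \<Rightarrow> ('a \<Rightarrow> complex) \<Rightarrow> complex" where
  "\<beta> z F = \<rho> z (\<lambda>u v. F u * \<phi> v)"

lemma bb: "bclin F \<Longrightarrow> (\<lambda>u v. F u * \<phi> v) \<in> bbil cs" using tensor_bbil phi_bc by blast

lemma rb_add: "S\<in>bbil cs \<Longrightarrow> T\<in>bbil cs \<Longrightarrow> \<rho> a (\<lambda>x y. S x y + T x y) = \<rho> a S + \<rho> a T"
  using rb[of a] unfolding bidual_elem_def by blast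
lemma rb_mult: "T\<in>bbil cs \<Longrightarrow> \<rho> a (\<lambda>x y. c * T x y) = c * \<rho> a T"
  using rb[of a] unfolding bidual_elem_def by blast

lemma b_addz: "bclin F \<Longrightarrow> \<beta> (z1 + z2) F = \<beta> z1 F + \<beta> z2 F"
  unfolding \<beta>_def using radd bb by blast
lemma b_cs: "bclin F \<Longrightarrow> \<beta> (cs c z) F = c * \<beta> z F"
  unfolding \<beta>_def using rcs bb by blast
lemma b_addF: "bclin F \<Longrightarrow> bclin G \<Longrightarrow> \<beta> z (\<lambda>u. F u + G u) = \<beta> z F + \<beta> z G"
proof -
  assume F: "bclin F" and G: "bclin G"
  have "(\<lambda>u v. (F u + G u) * \<phi> v) = (\<lambda>u v. F u * \<phi> v + G u * \<phi> v)" by (simp add: algebra_simps)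
  then show ?thesis unfolding \<beta>_def using rb_add[OF bb[OF F] bb[OF G]] by simp
qed
lemma b_cF: "bclin F \<Longrightarrow> \<beta> z (\<lambda>u. c * F u) = c * \<beta> z F"
proof -
  assume F: "bclin F"
  have "(\<lambda>u v. (c * F u) * \<phi> v) = (\<lambda>u v. c * (F u * \<phi> v))" by (simp add: algebra_simps)
  then show ?thesis unfolding \<beta>_def using rb_mult[OF bb[OF F]] by simp
qed
lemma b_left: "bclin F \<Longrightarrow> \<beta> x (\<lambda>u. F (a * u)) = \<beta> (a * x) F"
  unfolding \<beta>_def using rl[OF bb] unfolding lact_def by simp
lemma b_right: "bclin F \<Longrightarrow> \<beta> (x * a) F = \<phi> a * \<beta> x F"
proof -
  assume F: "bclin F"
  have "\<beta> (x * a) F = \<rho> x (\<lambda>u v. F u * \<phi> (v * a))" unfolding \<beta>_def using rr[OF bb[OF F]] unfolding ract_def by simp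
  also have "(\<lambda>u v. F u * \<phi> (v * a)) = (\<lambda>u v. \<phi> a * (F u * \<phi> v))" by (simp add: phi_mult algebra_simps)
  finally show ?thesis unfolding \<beta>_def using rb_mult[OF bb[OF F]] by simp
qed
lemma b_phi: "\<beta> x (\<lambda>u. c * \<phi> u) = c * \<phi> x"
proof -
  have "\<beta> x (\<lambda>u. c * \<phi> u) = c * \<beta> x \<phi>" by (rule b_cF[OF phi_bc])
  also have "\<beta> x \<phi> = \<phi> x" unfolding \<beta>_def using rphi[of x] by (simp add: phi_mult)
  finally show ?thesis .
qed

end



context setting begin

lemma sum_prod_split: "sum f (A \<times> B) = (\<Sum>x\<in>A. \<Sum>y\<in>B. f (x,y))"
  by (subst sum.cartesian_product) simp

definition Iset :: "'a set \<Rightarrow> (('a \<times> 'a) \<times> nat) set" where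
  "Iset S = (S \<times> S) \<times> {0,1,2}"

lemma finite_Iset: "finite S \<Longrightarrow> finite (Iset S)" unfolding Iset_def by simp

definition LG :: "'a set \<Rightarrow> ('a \<Rightarrow> 'a) \<Rightarrow> ('a \<times> 'a) \<times> nat \<Rightarrow> 'a" where
  "LG S G = (\<lambda>((a,x),k). if a \<in> S \<and> x \<in> S then
      (if k = 0 then a * G x - G (a * x) else if k = 1 then G (x * a) - cs (\<phi> a) (G x)
       else if k = 2 then cs (\<phi> (G x)) a0 else 0) else 0)"

definition wv :: "'a set \<Rightarrow> ('a \<times> 'a) \<times> nat \<Rightarrow> 'a" where
  "wv S = (\<lambda>((a,x),k). if a \<in> S \<and> x \<in> S \<and> k = 2 then cs (\<phi> x) a0 else 0)"

definition pn :: "'a set \<Rightarrow> (('a \<times> 'a) \<times> nat \<Rightarrow> 'a) \<Rightarrow> real" where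
  "pn S v = (\<Sum>i\<in>Iset S. norm (v i))"

lemma LG_add: "LG S (\<lambda>y. G y + G' y) = LG S G + LG S G'"
  unfolding LG_def by (auto simp: fun_eq_iff cl_add[OF phi_cl] cs_addR cs_addL algebra_simps)

lemma LG_scale: "LG S (\<lambda>y. r *\<^sub>R G y) = r *\<^sub>R LG S G"
proof -
  have "cs (\<phi> (r *\<^sub>R y)) a0 = r *\<^sub>R cs (\<phi> y) a0" for y
    using cs_cs[of "complex_of_real r" "\<phi> y" a0] by (simp add: cl_scaleR[OF phi_cl] cs_real)
  then show ?thesis unfolding LG_def by (auto simp: fun_eq_iff cs_scaleR algebra_simps scaleR_diff_right)
qed

lemma LG_0: "LG S (\<lambda>y. 0) = 0"
  unfolding LG_def by (auto simp: fun_eq_iff cl_0[OF phi_cl])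

lemma pn_add: "pn S (v + v') \<le> pn S v + pn S v'"
  unfolding pn_def by (simp add: sum.distrib[symmetric] sum_mono norm_triangle_ineq)
lemma pn_scale: "pn S (c *\<^sub>R v) = \<bar>c\<bar> * pn S v"
  unfolding pn_def by (simp add: sum_distrib_left)
lemma pn_nonneg: "0 \<le> pn S v" unfolding pn_def by (simp add: sum_nonneg)
lemma pn_minus: "pn S (- v) = pn S v" unfolding pn_def by simp

lemma main_approx:
  assumes S: "finite S" and e: "e > 0"
  shows "\<exists>G\<in>fr. pn S (LG S G - wv S) < e"
proof (rule ccontr)
  assume "\<not> ?thesis"
  then have big: "\<And>G. G \<in> fr \<Longrightarrow> e \<le> pn S (LG S G - wv S)" by (meson not_le)
  define w where "w = wv S"
  define G0 where "G0 = {(LG S G + t *\<^sub>R w, t * e) | G t. G \<in> fr}"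
  have G0I: "(LG S G + t *\<^sub>R w, t * e) \<in> G0" if "G \<in> fr" for G t
    unfolding G0_def using that by blast
  have vg: "vgraph (pn S) G0"
  proof (rule vgraphI)
    fix x a b assume "(x,a)\<in>G0" "(x,b)\<in>G0"
    then obtain G t G' t' where h: "G\<in>fr" "G'\<in>fr" "x = LG S G + t *\<^sub>R w" "a = t * e"
      "x = LG S G' + t' *\<^sub>R w" "b = t' * e" unfolding G0_def by blast
    show "a = b"
    proof (cases "t = t'")
      case True then show ?thesis using h by simp
    next
      case False
      define c where "c = 1 / (t' - t)"
      define H where "H = (\<lambda>y. (\<lambda>y. c *\<^sub>R G y) y + (\<lambda>y. (- c) *\<^sub>R G' y) y)"
      have H: "H \<in> fr" unfolding H_def by (intro fr_add fr_scale h(1,2))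
      have "LG S H = c *\<^sub>R (LG S G - LG S G')"
        unfolding H_def LG_add LG_scale by (simp add: scaleR_diff_right)
      also have "LG S G - LG S G' = (t' - t) *\<^sub>R w" using h(3,5)
        by (simp add: algebra_simps scaleR_diff_left)
      also have "c *\<^sub>R ((t' - t) *\<^sub>R w) = w" unfolding c_def using False by simp
      finally have "LG S H - w = 0" by simp
      then have "pn S (LG S H - w) = 0" unfolding pn_def by simp
      then show ?thesis using big[OF H] e w_def by simp
    qed
  next
    show "(0,0)\<in>G0" using G0I[OF fr0, of 0] LG_0 by simp
  next
    fix x a y b assume "(x,a)\<in>G0" "(y,b)\<in>G0"
    then obtain G t G' t' where h: "G\<in>fr" "G'\<in>fr" "x = LG S G + t *\<^sub>R w" "a = t * e"
      "y = LG S G' + t' *\<^sub>R w" "b = t' * e" unfolding G0_def by blast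
    have "(LG S (\<lambda>y. G y + G' y) + (t + t') *\<^sub>R w, (t + t') * e) \<in> G0"
      by (rule G0I[OF fr_add[OF h(2,1)]])
    then show "(x+y,a+b)\<in>G0" using h unfolding LG_add by (simp add: algebra_simps scaleR_add_left)
  next
    fix x a c assume "(x,a)\<in>G0"
    then obtain G t where h: "G\<in>fr" "x = LG S G + t *\<^sub>R w" "a = t * e" unfolding G0_def by blast
    have "(LG S (\<lambda>y. c *\<^sub>R G y) + (c * t) *\<^sub>R w, (c * t) * e) \<in> G0"
      by (rule G0I[OF fr_scale[OF h(1)]])
    then show "(c *\<^sub>R x, c*a)\<in>G0" using h unfolding LG_scale by (simp add: scaleR_add_right mult.assoc)
  next
    fix x a assume "(x,a)\<in>G0"
    then obtain G t where h: "G\<in>fr" "x = LG S G + t *\<^sub>R w" "a = t * e" unfolding G0_def by blast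
    show "a \<le> pn S x"
    proof (cases "t > 0")
      case False
      then have "a \<le> 0" using h e by (simp add: mult_nonpos_nonneg)
      then show ?thesis using pn_nonneg order_trans by blast
    next
      case True
      define H where "H = (\<lambda>y. (- 1 / t) *\<^sub>R G y)"
      have H: "H \<in> fr" unfolding H_def by (rule fr_scale[OF h(1)])
      have "x = (- t) *\<^sub>R (LG S H - w)"
        unfolding H_def LG_scale h(2) using True by (simp add: scaleR_diff_right)
      then have "pn S x = t * pn S (LG S H - w)" using True by (simp add: pn_scale pn_minus)
      moreover have "e \<le> pn S (LG S H - w)" using big[OF H] w_def by simp
      ultimately show ?thesis using h True by simp
    qed
  qed
  have psub: "\<And>x y. pn S (x + y) \<le> pn S x + pn S y" by (rule pn_add)
  have phom: "\<And>c x. c \<ge> 0 \<Longrightarrow> pn S (c *\<^sub>R x) = c * pn S x" by (simp add: pn_scale)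
  obtain l where ladd: "\<And>x y. l (x + y) = l x + l y" and lsc: "\<And>c x. l (c *\<^sub>R x) = c * l x"
    and lle: "\<And>x. l x \<le> pn S x" and lG0: "\<And>x a. (x,a)\<in>G0 \<Longrightarrow> l x = a"
    using HB_graph[OF psub phom vg] by blast
  have lLG: "l (LG S G) = 0" if "G \<in> fr" for G using lG0[OF G0I[OF that, of 0]] by simp
  have lw: "l w = e" using lG0[OF G0I[OF fr0, of 1]] LG_0 by simp
  have l0: "l 0 = 0" using lsc[of 0 0] by simp
  define \<delta> where "\<delta> i y = (\<lambda>j. if j = i then y else (0::'a))" for i :: "('a \<times> 'a) \<times> nat" and y
  define lc where "lc i y = l (\<delta> i y)" for i y
  have lc_add: "lc i (x + y) = lc i x + lc i y" for i x y
  proof -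
    have "\<delta> i (x + y) = \<delta> i x + \<delta> i y" unfolding \<delta>_def by (auto simp: fun_eq_iff)
    then show ?thesis unfolding lc_def using ladd by simp
  qed
  have lc_sc: "lc i (r *\<^sub>R x) = r * lc i x" for i r x
  proof -
    have "\<delta> i (r *\<^sub>R x) = r *\<^sub>R \<delta> i x" unfolding \<delta>_def by (auto simp: fun_eq_iff)
    then show ?thesis unfolding lc_def using lsc by simp
  qed
  have lc_bd: "lc i x \<le> 1 * norm x" for i x
  proof -
    have "lc i x \<le> pn S (\<delta> i x)" unfolding lc_def by (rule lle)
    also have "pn S (\<delta> i x) = (\<Sum>j\<in>Iset S. if j = i then norm x else 0)"
      unfolding pn_def \<delta>_def by (intro sum.cong) auto
    also have "\<dots> = (if i \<in> Iset S then norm x else 0)" by (rule sum.delta[OF finite_Iset[OF S]])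
    also have "\<dots> \<le> 1 * norm x" by simp
    finally show ?thesis .
  qed
  have lc0: "lc i 0 = 0" for i using lc_sc[of i 0 0] by simp
  have lc_diff: "lc i (x - y) = lc i x - lc i y" for i x y
    using lc_add[of i x "(-1) *\<^sub>R y"] lc_sc[of i "-1" y] by simp
  have decomp: "finite K \<Longrightarrow> (\<forall>j. j \<notin> K \<longrightarrow> v j = 0) \<Longrightarrow> l v = (\<Sum>i\<in>K. lc i (v i))" for K v
  proof (induction K arbitrary: v rule: finite_induct)
    case empty
    then have "v = 0" by (auto simp: fun_eq_iff)
    then show ?case using l0 by (simp only: sum.empty)
  next
    case (insert k K)
    define v' where "v' = v(k := 0)"
    have "v = \<delta> k (v k) + v'" unfolding v'_def \<delta>_def by (auto simp: fun_eq_iff)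
    then have "l v = lc k (v k) + l v'" unfolding lc_def using ladd by metis
    also have "l v' = (\<Sum>i\<in>K. lc i (v' i))" using insert.prems unfolding v'_def by (intro insert.IH) auto
    also have "\<dots> = (\<Sum>i\<in>K. lc i (v i))" unfolding v'_def using insert.hyps by (intro sum.cong) auto
    finally show ?case using insert.hyps by simp
  qed
  define \<Lambda> where "\<Lambda> i = cplx (lc i)" for i
  have \<Lambda>b: "bclin (\<Lambda> i)" for i unfolding \<Lambda>_def by (rule cplx_props(1)[OF lc_add lc_sc lc_bd])
  have lcs: "lc i (cs z y) = Re (z * \<Lambda> i y)" for i z y unfolding \<Lambda>_def by (rule cplx_props(3)[OF lc_add lc_sc lc_bd])
  have suppLG: "\<forall>j. j \<notin> Iset S \<longrightarrow> LG S G j = 0" for G unfolding Iset_def LG_def by auto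
  have suppw: "\<forall>j. j \<notin> Iset S \<longrightarrow> w j = 0" unfolding Iset_def w_def wv_def by auto
  have sumI: "(\<Sum>i\<in>Iset S. f i) = (\<Sum>ax\<in>S \<times> S. f (ax,0) + f (ax,1) + f (ax,2))" for f :: "_ \<Rightarrow> real"
    unfolding Iset_def sum_prod_split by (simp add: algebra_simps)
  define J where "J = (S \<times> S) \<times> {0,1,2,3,4::nat}"
  have finJ: "finite J" unfolding J_def using S by simp
  have sumJ: "(\<Sum>j\<in>J. f j) = (\<Sum>ax\<in>S \<times> S. f (ax,0) + f (ax,1) + f (ax,2) + f (ax,3) + f (ax,4))" for f :: "_ \<Rightarrow> complex"
    unfolding J_def sum_prod_split by (simp add: algebra_simps)
  define zf where "zf j = (case j of ((a,x),k) \<Rightarrow> if k = 1 then a * x else if k = 2 then x * a else x)" for j :: "('a \<times> 'a) \<times> nat"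
  define Ff where "Ff j = (case j of ((a,x),k) \<Rightarrow>
      if k = 0 then (\<lambda>u. \<Lambda> ((a,x),0) (a * u)) else if k = 1 then (\<lambda>u. (-1) * \<Lambda> ((a,x),0) u)
      else if k = 2 then \<Lambda> ((a,x),1) else if k = 3 then (\<lambda>u. (- \<phi> a) * \<Lambda> ((a,x),1) u)
      else (\<lambda>u. \<Lambda> ((a,x),2) a0 * \<phi> u))" for j :: "('a \<times> 'a) \<times> nat"
  have Ffb: "\<forall>j\<in>J. bclin (Ff j)"
  proof
    fix j assume "j \<in> J"
    obtain a x k where j: "j = ((a,x),k)" by (metis prod.exhaust)
    have h1: "bclin (\<lambda>u. \<Lambda> ((a,x),0) (a * u))" by (rule bclin_lmult[OF \<Lambda>b])
    have h2: "bclin (\<lambda>u. (-1) * \<Lambda> ((a,x),0) u)" by (rule bclin_cmult[OF \<Lambda>b])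
    have h3: "bclin (\<Lambda> ((a,x),1))" by (rule \<Lambda>b)
    have h4: "bclin (\<lambda>u. (- \<phi> a) * \<Lambda> ((a,x),1) u)" by (rule bclin_cmult[OF \<Lambda>b])
    have h5: "bclin (\<lambda>u. \<Lambda> ((a,x),2) a0 * \<phi> u)" by (rule bclin_cmult[OF phi_bc])
    show "bclin (Ff j)" unfolding Ff_def j prod.case
      using h1 h2 h3 h4 h5 by (simp only: split: if_split) blast
  qed
  have rank1: "Re (\<Sum>j\<in>J. \<psi> (zf j) * Ff j e0) = 0" if ps: "bclin \<psi>" for \<psi> e0
  proof -
    note cl = bclinD[OF ps]
    have G1: "(\<lambda>y. cs (\<psi> y) e0) \<in> fr" using frS[OF fr0 ps, of e0] by simp
    have "0 = l (LG S (\<lambda>y. cs (\<psi> y) e0))" using lLG[OF G1] by simp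
    also have "\<dots> = (\<Sum>i\<in>Iset S. lc i (LG S (\<lambda>y. cs (\<psi> y) e0) i))"
      by (rule decomp[OF finite_Iset[OF S] suppLG])
    also have "\<dots> = (\<Sum>ax\<in>S \<times> S. Re (\<psi> (zf (ax,0)) * Ff (ax,0) e0 + \<psi> (zf (ax,1)) * Ff (ax,1) e0
        + \<psi> (zf (ax,2)) * Ff (ax,2) e0 + \<psi> (zf (ax,3)) * Ff (ax,3) e0 + \<psi> (zf (ax,4)) * Ff (ax,4) e0))"
      unfolding sumI
    proof (rule sum.cong[OF refl])
      fix ax assume "ax \<in> S \<times> S"
      then obtain a x where ax: "ax = (a,x)" "a \<in> S" "x \<in> S" by blast
      have c0: "LG S (\<lambda>y. cs (\<psi> y) e0) ((a,x),0) = cs (\<psi> x) (a * e0) - cs (\<psi> (a * x)) e0"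
        unfolding LG_def using ax by (simp add: cs_multR)
      have c1: "LG S (\<lambda>y. cs (\<psi> y) e0) ((a,x),1) = cs (\<psi> (x * a)) e0 - cs (\<phi> a * \<psi> x) e0"
        unfolding LG_def using ax by (simp add: cs_cs)
      have c2: "LG S (\<lambda>y. cs (\<psi> y) e0) ((a,x),2) = cs (\<psi> x * \<phi> e0) a0"
        unfolding LG_def using ax by (simp add: cl_cs[OF phi_cl])
      show "lc (ax,0) (LG S (\<lambda>y. cs (\<psi> y) e0) (ax,0)) + lc (ax,1) (LG S (\<lambda>y. cs (\<psi> y) e0) (ax,1))
          + lc (ax,2) (LG S (\<lambda>y. cs (\<psi> y) e0) (ax,2)) =
        Re (\<psi> (zf (ax,0)) * Ff (ax,0) e0 + \<psi> (zf (ax,1)) * Ff (ax,1) e0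
        + \<psi> (zf (ax,2)) * Ff (ax,2) e0 + \<psi> (zf (ax,3)) * Ff (ax,3) e0 + \<psi> (zf (ax,4)) * Ff (ax,4) e0)"
        unfolding ax(1) c0 c1 c2 lc_diff lcs zf_def Ff_def by (simp add: algebra_simps)
    qed
    also have "\<dots> = Re (\<Sum>j\<in>J. \<psi> (zf j) * Ff j e0)" unfolding sumJ by (simp add: Re_sum)
    finally show ?thesis by simp
  qed
  have rank1c: "(\<Sum>j\<in>J. \<psi> (zf j) * Ff j e0) = 0" if ps: "bclin \<psi>" for \<psi> e0
  proof -
    have ps': "bclin (\<lambda>y. (- \<i>) * \<psi> y)" by (rule bclin_cmult[OF ps])
    have "Re (\<Sum>j\<in>J. (- \<i> * \<psi> (zf j)) * Ff j e0) = 0" using rank1[OF ps'] .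
    moreover have "(\<Sum>j\<in>J. (- \<i> * \<psi> (zf j)) * Ff j e0) = (- \<i>) * (\<Sum>j\<in>J. \<psi> (zf j) * Ff j e0)"
      by (simp add: sum_distrib_left algebra_simps)
    ultimately have "Im (\<Sum>j\<in>J. \<psi> (zf j) * Ff j e0) = 0" by simp
    then show ?thesis using rank1[OF ps] by (simp add: complex_eq_iff)
  qed
  have hyp: "\<forall>\<psi>. bclin \<psi> \<longrightarrow> (\<forall>e. (\<Sum>j\<in>J. \<psi> (zf j) * Ff j e) = 0)"
  proof (intro allI impI)
    fix \<psi> e0 assume "bclin \<psi>"
    then show "(\<Sum>j\<in>J. \<psi> (zf j) * Ff j e0) = 0" by (rule rank1c)
  qed
  have tr: "(\<Sum>j\<in>J. \<beta> (zf j) (Ff j)) = 0"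
    using transfer[OF b_addz b_cs b_addF b_cF finJ Ffb hyp] .
  have "(\<Sum>j\<in>J. \<beta> (zf j) (Ff j)) = (\<Sum>ax\<in>S \<times> S. \<Lambda> (ax,2) a0 * \<phi> (snd ax))"
    unfolding sumJ
  proof (rule sum.cong[OF refl])
    fix ax :: "'a \<times> 'a" obtain a x where ax: "ax = (a,x)" by (metis prod.exhaust)
    have e0: "\<beta> x (\<lambda>u. \<Lambda> ((a,x),0) (a * u)) = \<beta> (a * x) (\<Lambda> ((a,x),0))" by (rule b_left[OF \<Lambda>b])
    have e1: "\<beta> (a * x) (\<lambda>u. (-1) * \<Lambda> ((a,x),0) u) = (-1) * \<beta> (a * x) (\<Lambda> ((a,x),0))" by (rule b_cF[OF \<Lambda>b])
    have e2: "\<beta> (x * a) (\<Lambda> ((a,x),1)) = \<phi> a * \<beta> x (\<Lambda> ((a,x),1))" by (rule b_right[OF \<Lambda>b])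
    have e3: "\<beta> x (\<lambda>u. (- \<phi> a) * \<Lambda> ((a,x),1) u) = (- \<phi> a) * \<beta> x (\<Lambda> ((a,x),1))" by (rule b_cF[OF \<Lambda>b])
    have e4: "\<beta> x (\<lambda>u. \<Lambda> ((a,x),2) a0 * \<phi> u) = \<Lambda> ((a,x),2) a0 * \<phi> x" by (rule b_phi)
    show "\<beta> (zf (ax,0)) (Ff (ax,0)) + \<beta> (zf (ax,1)) (Ff (ax,1)) + \<beta> (zf (ax,2)) (Ff (ax,2))
        + \<beta> (zf (ax,3)) (Ff (ax,3)) + \<beta> (zf (ax,4)) (Ff (ax,4)) = \<Lambda> (ax,2) a0 * \<phi> (snd ax)"
      unfolding ax zf_def Ff_def using e0 e1 e2 e3 e4 by simp
  qed
  then have z: "(\<Sum>ax\<in>S \<times> S. \<Lambda> (ax,2) a0 * \<phi> (snd ax)) = 0" using tr by simp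
  have "e = l w" using lw by simp
  also have "\<dots> = (\<Sum>i\<in>Iset S. lc i (w i))" by (rule decomp[OF finite_Iset[OF S] suppw])
  also have "\<dots> = (\<Sum>ax\<in>S \<times> S. Re (\<Lambda> (ax,2) a0 * \<phi> (snd ax)))"
    unfolding sumI
  proof (rule sum.cong[OF refl])
    fix ax assume "ax \<in> S \<times> S"
    then obtain a x where ax: "ax = (a,x)" "a \<in> S" "x \<in> S" by blast
    show "lc (ax,0) (w (ax,0)) + lc (ax,1) (w (ax,1)) + lc (ax,2) (w (ax,2)) = Re (\<Lambda> (ax,2) a0 * \<phi> (snd ax))"
      unfolding ax(1) w_def wv_def using ax lc0 lcs by (simp add: mult.commute)
  qed
  also have "\<dots> = Re (\<Sum>ax\<in>S \<times> S. \<Lambda> (ax,2) a0 * \<phi> (snd ax))" by (simp add: Re_sum)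
  also have "\<dots> = 0" using z by simp
  finally show False using e by simp
qed

end



context cba begin
lemma ptensor_single:
  assumes "\<forall>T\<in>bbil cs. F T = T u v"
  shows "F \<in> ptensor cs"
proof -
  define a where "a = (\<lambda>n::nat. if n = 0 then u else 0)"
  define b where "b = (\<lambda>n::nat. if n = 0 then v else 0)"
  have e1: "(\<lambda>n. norm (a n) * norm (b n)) = (\<lambda>n. if n = 0 then norm u * norm v else 0)"
    unfolding a_def b_def by auto
  have s1: "(\<lambda>n. norm (a n) * norm (b n)) sums (norm u * norm v)"
    unfolding e1 using sums_single[of 0 "\<lambda>_. norm u * norm v"] by simp
  have "(\<lambda>n. T (a n) (b n)) sums T u v" if "T \<in> bbil cs" for T
  proof -
    have "(\<lambda>n. T (a n) (b n)) = (\<lambda>n. if n = 0 then T u v else 0)"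
      unfolding a_def b_def using bbil_0L[OF that] by auto
    then show ?thesis using sums_single[of 0 "\<lambda>_. T u v"] by simp
  qed
  then have "\<forall>T\<in>bbil cs. F T = (\<Sum>n. T (a n) (b n))" using assms sums_unique by metis
  then show ?thesis unfolding ptensor_def using sums_summable[OF s1] by blast
qed
end

context setting begin

definition Gsel :: "'a set \<times> real \<Rightarrow> 'a \<Rightarrow> 'a" where
  "Gsel i = (if finite (fst i) \<and> snd i > 0 then (SOME G. G \<in> fr \<and> pn (fst i) (LG (fst i) G - wv (fst i)) < snd i)
     else (\<lambda>y. 0))"

lemma Gsel_fr: "Gsel i \<in> fr"
proof (cases "finite (fst i) \<and> snd i > 0")
  case True
  then have "\<exists>G. G \<in> fr \<and> pn (fst i) (LG (fst i) G - wv (fst i)) < snd i" using main_approx by blast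
  then show ?thesis unfolding Gsel_def using True by (metis (mono_tags, lifting) someI_ex)
next
  case False show ?thesis unfolding Gsel_def if_not_P[OF False] by (rule fr0)
qed

lemma Gsel_good: "finite S \<Longrightarrow> e > 0 \<Longrightarrow> pn S (LG S (Gsel (S,e)) - wv S) < e"
proof -
  assume S: "finite S" and e: "e > 0"
  then have "\<exists>G. G \<in> fr \<and> pn S (LG S G - wv S) < e" using main_approx by blast
  then show ?thesis unfolding Gsel_def using S e by (simp, metis (mono_tags, lifting) someI_ex)
qed

lemma comp_le: "finite S \<Longrightarrow> a \<in> S \<Longrightarrow> x \<in> S \<Longrightarrow> k \<in> {0,1,2} \<Longrightarrow> norm (v ((a,x),k)) \<le> pn S v"
  unfolding pn_def Iset_def by (rule member_le_sum) auto

definition rn :: "'a set \<times> real \<Rightarrow> 'a \<Rightarrow> (('a \<Rightarrow> 'a \<Rightarrow> complex) \<Rightarrow> complex)" where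
  "rn i x = (\<lambda>T. T (Gsel i x) a0)"

lemma a0nz: "norm a0 > 0"
proof -
  have "a0 \<noteq> 0" using a0 cl_0[OF phi_cl] by auto
  then show ?thesis by simp
qed

definition FF :: "('a set \<times> real) filter" where
  "FF = finite_subsets_at_top UNIV \<times>\<^sub>F at_right 0"

lemma ev_FF: "finite X \<Longrightarrow> \<epsilon> > 0 \<Longrightarrow> eventually (\<lambda>i. X \<subseteq> fst i \<and> finite (fst i) \<and> 0 < snd i \<and> snd i < \<epsilon>) FF"
proof -
  assume X: "finite X" and ep: "\<epsilon> > 0"
  have e1: "eventually (\<lambda>S. X \<subseteq> S \<and> finite S) (finite_subsets_at_top UNIV)"
    unfolding eventually_finite_subsets_at_top using X by blast
  have e2: "eventually (\<lambda>e. e \<in> {0<..<\<epsilon>}) (at_right (0::real))" using eventually_at_right_real[OF ep] .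
  show ?thesis unfolding FF_def eventually_prod_filter
    by (intro exI[of _ "\<lambda>S. X \<subseteq> S \<and> finite S"] exI[of _ "\<lambda>e. e \<in> {0<..<\<epsilon>}"] conjI e1 e2 allI impI) auto
qed

lemma tend0: "(\<And>\<epsilon>. \<epsilon> > 0 \<Longrightarrow> eventually (\<lambda>i. norm (f i) < \<epsilon>) FF) \<Longrightarrow> (f \<longlongrightarrow> 0) FF"
  unfolding tendsto_iff by simp

lemma net_bot: "FF \<noteq> bot"
proof -
  show "FF \<noteq> bot" unfolding FF_def prod_filter_eq_bot
    using finite_subsets_at_top_neq_bot trivial_limit_at_right_real by blast
qed

lemma net_i: "(\<forall>x. rn i x \<in> ptensor cs) \<and>
          (\<forall>x y. \<forall>T\<in>bbil cs. rn i (x + y) T = rn i x T + rn i y T) \<and>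
          (\<forall>c x. \<forall>T\<in>bbil cs. rn i (cs c x) T = c * rn i x T) \<and>
          (\<exists>C. \<forall>x. ptnorm cs (rn i x) \<le> C * norm x)"
proof -
  obtain K where K: "\<And>x. norm (Gsel i x) \<le> K * norm x" using fr_lin[OF Gsel_fr] by blast
  have lin: "\<And>x y. Gsel i (x + y) = Gsel i x + Gsel i y" "\<And>c x. Gsel i (cs c x) = cs c (Gsel i x)"
    using fr_lin[OF Gsel_fr] by blast+
  show "(\<forall>x. rn i x \<in> ptensor cs) \<and>
          (\<forall>x y. \<forall>T\<in>bbil cs. rn i (x + y) T = rn i x T + rn i y T) \<and>
          (\<forall>c x. \<forall>T\<in>bbil cs. rn i (cs c x) T = c * rn i x T) \<and>
          (\<exists>C. \<forall>x. ptnorm cs (rn i x) \<le> C * norm x)"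
  proof (intro conjI allI ballI)
    fix x show "rn i x \<in> ptensor cs" unfolding rn_def by (rule ptensor_single[of _ "Gsel i x" a0]) simp
  next
    fix x y T assume "T \<in> bbil cs"
    then show "rn i (x + y) T = rn i x T + rn i y T" unfolding rn_def lin by (rule bbil_addL)
  next
    fix c x T assume "T \<in> bbil cs"
    then show "rn i (cs c x) T = c * rn i x T" unfolding rn_def lin by (rule bbil_csL)
  next
    have "ptnorm cs (rn i x) \<le> (K * norm a0) * norm x" for x
    proof -
      have "ptnorm cs (rn i x) \<le> norm (Gsel i x) * norm a0" unfolding rn_def by (rule ptnorm_single(2)) simp
      also have "\<dots> \<le> (K * norm x) * norm a0" using K[of x] by (rule mult_right_mono) simp
      finally show ?thesis by (simp add: algebra_simps)
    qed
    then show "\<exists>C. \<forall>x. ptnorm cs (rn i x) \<le> C * norm x" by blast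
  qed
qed

lemma net_c2: "((\<lambda>i. ptnorm cs (\<lambda>T. lact a (rn i x) T - rn i (a * x) T)) \<longlongrightarrow> 0) FF"
proof -
  show "((\<lambda>i. ptnorm cs (\<lambda>T. lact a (rn i x) T - rn i (a * x) T)) \<longlongrightarrow> 0) FF"
  proof (rule tend0)
    fix \<epsilon> :: real assume ep: "\<epsilon> > 0"
    have "eventually (\<lambda>i. {a,x} \<subseteq> fst i \<and> finite (fst i) \<and> 0 < snd i \<and> snd i < \<epsilon> / norm a0) FF"
      using ev_FF[of "{a,x}" "\<epsilon> / norm a0"] ep a0nz by simp
    then show "eventually (\<lambda>i. norm (ptnorm cs (\<lambda>T. lact a (rn i x) T - rn i (a * x) T)) < \<epsilon>) FF"
    proof (rule eventually_mono)
      fix i assume h: "{a,x} \<subseteq> fst i \<and> finite (fst i) \<and> 0 < snd i \<and> snd i < \<epsilon> / norm a0"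
      obtain S e where i: "i = (S,e)" by (metis prod.exhaust)
      have rep: "\<forall>T\<in>bbil cs. (\<lambda>T. lact a (rn i x) T - rn i (a * x) T) T = T (a * Gsel i x - Gsel i (a * x)) a0"
        unfolding rn_def lact_def using bbil_diffL by simp
      note p = ptnorm_single[OF rep]
      have "norm (a * Gsel i x - Gsel i (a * x)) \<le> pn S (LG S (Gsel (S,e)) - wv S)"
        using comp_le[of S a x 0 "LG S (Gsel (S,e)) - wv S"] h i unfolding LG_def wv_def by simp
      also have "\<dots> < e" using Gsel_good h i by simp
      finally have "norm (a * Gsel i x - Gsel i (a * x)) * norm a0 < e * norm a0" using a0nz by simp
      also have "e * norm a0 < \<epsilon>" using h i a0nz by (simp add: pos_less_divide_eq)
      finally show "norm (ptnorm cs (\<lambda>T. lact a (rn i x) T - rn i (a * x) T)) < \<epsilon>" using p by simp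
    qed
  qed
qed

lemma net_c3: "((\<lambda>i. ptnorm cs (\<lambda>T. rn i (x * a) T - \<phi> a * rn i x T)) \<longlongrightarrow> 0) FF"
proof -
  show "((\<lambda>i. ptnorm cs (\<lambda>T. rn i (x * a) T - \<phi> a * rn i x T)) \<longlongrightarrow> 0) FF"
  proof (rule tend0)
    fix \<epsilon> :: real assume ep: "\<epsilon> > 0"
    have "eventually (\<lambda>i. {a,x} \<subseteq> fst i \<and> finite (fst i) \<and> 0 < snd i \<and> snd i < \<epsilon> / norm a0) FF"
      using ev_FF[of "{a,x}" "\<epsilon> / norm a0"] ep a0nz by simp
    then show "eventually (\<lambda>i. norm (ptnorm cs (\<lambda>T. rn i (x * a) T - \<phi> a * rn i x T)) < \<epsilon>) FF"
    proof (rule eventually_mono)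
      fix i assume h: "{a,x} \<subseteq> fst i \<and> finite (fst i) \<and> 0 < snd i \<and> snd i < \<epsilon> / norm a0"
      obtain S e where i: "i = (S,e)" by (metis prod.exhaust)
      have rep: "\<forall>T\<in>bbil cs. (\<lambda>T. rn i (x * a) T - \<phi> a * rn i x T) T = T (Gsel i (x * a) - cs (\<phi> a) (Gsel i x)) a0"
        unfolding rn_def using bbil_diffL bbil_csL by simp
      note p = ptnorm_single[OF rep]
      have "norm (Gsel i (x * a) - cs (\<phi> a) (Gsel i x)) \<le> pn S (LG S (Gsel (S,e)) - wv S)"
        using comp_le[of S a x 1 "LG S (Gsel (S,e)) - wv S"] h i unfolding LG_def wv_def by simp
      also have "\<dots> < e" using Gsel_good h i by simp
      finally have "norm (Gsel i (x * a) - cs (\<phi> a) (Gsel i x)) * norm a0 < e * norm a0" using a0nz by simp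
      also have "e * norm a0 < \<epsilon>" using h i a0nz by (simp add: pos_less_divide_eq)
      finally show "norm (ptnorm cs (\<lambda>T. rn i (x * a) T - \<phi> a * rn i x T)) < \<epsilon>" using p by simp
    qed
  qed
qed

lemma net_c4: "((\<lambda>i. rn i x (\<lambda>u v. \<phi> (u * v)) - \<phi> x) \<longlongrightarrow> 0) FF"
proof -
  show "((\<lambda>i. rn i x (\<lambda>u v. \<phi> (u * v)) - \<phi> x) \<longlongrightarrow> 0) FF"
  proof (rule tend0)
    fix \<epsilon> :: real assume ep: "\<epsilon> > 0"
    have "eventually (\<lambda>i. {x} \<subseteq> fst i \<and> finite (fst i) \<and> 0 < snd i \<and> snd i < \<epsilon> * norm a0) FF"
      using ev_FF[of "{x}" "\<epsilon> * norm a0"] ep a0nz by simp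
    then show "eventually (\<lambda>i. norm (rn i x (\<lambda>u v. \<phi> (u * v)) - \<phi> x) < \<epsilon>) FF"
    proof (rule eventually_mono)
      fix i assume h: "{x} \<subseteq> fst i \<and> finite (fst i) \<and> 0 < snd i \<and> snd i < \<epsilon> * norm a0"
      obtain S e where i: "i = (S,e)" by (metis prod.exhaust)
      have v: "rn i x (\<lambda>u v. \<phi> (u * v)) - \<phi> x = \<phi> (Gsel i x) - \<phi> x" unfolding rn_def using a0 phi_mult by simp
      have "norm (cs (\<phi> (Gsel i x)) a0 - cs (\<phi> x) a0) \<le> pn S (LG S (Gsel (S,e)) - wv S)"
        using comp_le[of S x x 2 "LG S (Gsel (S,e)) - wv S"] h i unfolding LG_def wv_def by simp
      also have "\<dots> < e" using Gsel_good h i by simp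
      also have "norm (cs (\<phi> (Gsel i x)) a0 - cs (\<phi> x) a0) = cmod (\<phi> (Gsel i x) - \<phi> x) * norm a0"
        by (simp add: cs_diffL[symmetric] cs_norm)
      finally have "cmod (\<phi> (Gsel i x) - \<phi> x) * norm a0 < \<epsilon> * norm a0" using h i by simp
      then have "cmod (\<phi> (Gsel i x) - \<phi> x) < \<epsilon>" using a0nz by simp
      then show "norm (rn i x (\<lambda>u v. \<phi> (u * v)) - \<phi> x) < \<epsilon>" using v by simp
    qed
  qed
qed

lemma net: "approx_left_phi_biproj_net cs \<phi> FF rn"
  unfolding approx_left_phi_biproj_net_def using net_bot net_i net_c2 net_c3 net_c4 by blast

end

theorem theorem2p6:
  fixes cs :: "complex \<Rightarrow> 'a::{real_normed_algebra,banach} \<Rightarrow> 'a"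
    and \<phi> :: "'a \<Rightarrow> complex"
  assumes "cplx_banach_alg cs"
    and "character cs \<phi>"
    and "phi_biflat cs \<phi>"
  shows "approx_left_phi_biprojective cs \<phi>"
proof -
  interpret cba cs by unfold_locales (rule assms(1))
  obtain \<rho> where rho: "\<forall>a. bidual_elem cs (\<rho> a)"
     "\<forall>a b. \<forall>T\<in>bbil cs. \<rho> (a + b) T = \<rho> a T + \<rho> b T"
     "\<forall>c a. \<forall>T\<in>bbil cs. \<rho> (cs c a) T = c * \<rho> a T"
     "\<forall>a b. \<forall>T\<in>bbil cs. \<rho> (a * b) T = lact a (\<rho> b) T"
     "\<forall>a b. \<forall>T\<in>bbil cs. \<rho> (a * b) T = ract (\<rho> a) b T"
     "\<forall>a. \<rho> a (\<lambda>x y. \<phi> (x * y)) = \<phi> a"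
    using assms(3) unfolding phi_biflat_def by blast
  obtain x0 where x0: "\<phi> x0 \<noteq> 0" using assms(2) unfolding character_def by blast
  define a0 where "a0 = cs (1 / \<phi> x0) x0"
  have a0: "\<phi> a0 = 1" unfolding a0_def using cl_cs[OF char_clin[OF assms(2)]] x0 by simp
  interpret setting cs \<phi> \<rho> a0
    by unfold_locales (use assms(2) rho a0 in auto)
  show ?thesis unfolding approx_left_phi_biprojective_def using net by blast
qed


end
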